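(* Suppose $n\ge r_0$. Then with probability at least $1-\delta$ over the training features $S$, for every $r>0$, $$\mathfrak R\Big(\big\{f-f^*: f\in\mathcal F(B_h,w,S,r_0),\ \mathbb E_P[(f-f^* )^2]\le r\big\}\Big)\le\sqrt{\log(2/\delta)}\cdot\Theta\Big(\frac{d^{k_0}}{n}\Big)+\sqrt{\frac{r\,r_0}{n}}+2w.$$
   Context: $\mathcal X=S^{d-1}$, uniform probability measure $P=\mu$; $k_0\ge1$ constant, $d$ at least a large constant. $S=\{\vec x_i\}_{i=1}^n$ i.i.d. from $P$ (distinct). $K=K^{(0)}+K^{(1)}$, $K^{(0)}(u,v)=\frac{\pi-\arccos(u^\top v)}{2\pi}$, $K^{(1)}(u,v)=u^\top vK^{(0)}(u,v)$; RKHS $\mathcal H_K$, $\mathcal H_K(B)=\{h:\|h\|_{\mathcal H_K}\le B\}$. $\mathcal H_\ell$ = degree-$\ell$ spherical harmonics (dim $N(d,\ell)$, basis $Y_{\ell j}$), eigenspace of $T_K$ with eigenvalue $\mu_\ell$; $m_\ell=\sum_{\ell'\le\ell}N(d,\ell')$, $r_0=m_{k_0}$. Target $f^*=\sum_{\ell\le k_0,j}a_{\ell j}Y_{\ell j}$ with $\sum a_{\ell j}^2/\mu_\ell\le\gamma_0^2$. $\mathbf K_n=[K(\vec x_i,\vec x_j)/n]=\mathbf U\Sigma\mathbf U^\top$ (eigenvalues non-increasing), $\mathbf U^{(r_0)}$ the first $r_0$ columns; $\mathcal H_{S,r_0}=\{\sum_iK(\cdot,\vec x_i)\alpha_i:\alpha\in\mathrm{Span}(\mathbf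 U^{(r_0)})\}$. $B_h=\gamma_0+\Theta(1)$ is a constant, $w>0$, and $\mathcal F(B_h,w,S,r_0)=\{h+e:h\in\mathcal H_K(B_h)\cap\mathcal H_{S,r_0},\ \|e\|_\infty\le w\}$ (with $S$ held fixed). Rademacher complexity of a fixed class $\mathcal F$: $\mathfrak R(\mathcal F)=\mathbb E\big[\sup_{f\in\mathcal F}\frac1n\sum_{i=1}^n\sigma_if(\vec x'_i)\big]$, expectation over i.i.d. $\vec x'_i\sim P$ and independent Rademacher signs $\sigma_i$. $\Theta$ hides constants independent of $n,d,\delta,r$. *)

theory Defs
  imports "HOL-Probability.Probability" "HOL-Library.Function_Algebras"
begin

text \<open>Points of R^d are represented as extensional functions nat => real on {..<d}.\<close>

definition ip :: "nat \<Rightarrow> (nat \<Rightarrow> real) \<Rightarrow> (nat \<Rightarrow> real) \<Rightarrow> real" where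
  "ip d u v = (\<Sum>i<d. u i * v i)"

definition sph :: "nat \<Rightarrow> (nat \<Rightarrow> real) set" where
  "sph d = {x \<in> {..<d} \<rightarrow>\<^sub>E UNIV. (\<Sum>i<d. (x i)^2) = 1}"

definition lebesgue_d :: "nat \<Rightarrow> (nat \<Rightarrow> real) measure" where
  "lebesgue_d d = PiM {..<d} (\<lambda>_. lborel)"

definition cone :: "nat \<Rightarrow> (nat \<Rightarrow> real) set \<Rightarrow> (nat \<Rightarrow> real) set" where
  "cone d A = {restrict (\<lambda>i. t * x i) {..<d} | t x. 0 < t \<and> t \<le> 1 \<and> x \<in> A}"

text \<open>Uniform probability measure on the unit sphere S^{d-1} (normalized surface / cone measure).\<close>
definition unif_sphere :: "nat \<Rightarrow> (nat \<Rightarrow> real) measure" where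
  "unif_sphere d = measure_of (sph d) {A \<in> sets (lebesgue_d d). A \<subseteq> sph d}
     (\<lambda>A. emeasure (lebesgue_d d) (cone d A) / emeasure (lebesgue_d d) (cone d (sph d)))"

definition K0 :: "nat \<Rightarrow> (nat \<Rightarrow> real) \<Rightarrow> (nat \<Rightarrow> real) \<Rightarrow> real" where
  "K0 d u v = (pi - arccos (ip d u v)) / (2 * pi)"

definition K1 :: "nat \<Rightarrow> (nat \<Rightarrow> real) \<Rightarrow> (nat \<Rightarrow> real) \<Rightarrow> real" where
  "K1 d u v = ip d u v * K0 d u v"

definition Kker :: "nat \<Rightarrow> (nat \<Rightarrow> real) \<Rightarrow> (nat \<Rightarrow> real) \<Rightarrow> real" where
  "Kker d u v = K0 d u v + K1 d u v"

definition TK :: "nat \<Rightarrow> ((nat \<Rightarrow> real) \<Rightarrow> real) \<Rightarrow> (nat \<Rightarrow> real) \<Rightarrow> real" where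
  "TK d f x = (\<integral>y. Kker d x y * f y \<partial>unif_sphere d)"

definition mi :: "nat \<Rightarrow> nat \<Rightarrow> (nat \<Rightarrow> nat) set" where
  "mi d l = {m. (\<forall>i\<ge>d. m i = 0) \<and> (\<Sum>i<d. m i) = l}"

text \<open>Coefficients c of a homogeneous polynomial of degree l whose (formal) Laplacian vanishes:
  the coefficient of x^m' in the Laplacian is sum_i (m'_i+2)(m'_i+1) c(m'+2e_i).\<close>
definition harm_coeffs :: "nat \<Rightarrow> nat \<Rightarrow> ((nat \<Rightarrow> nat) \<Rightarrow> real) \<Rightarrow> bool" where
  "harm_coeffs d l c \<longleftrightarrow> (\<forall>m. m \<notin> mi d l \<longrightarrow> c m = 0) \<and>
     (\<forall>m'. (\<forall>i\<ge>d. m' i = 0) \<longrightarrow>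
        (\<Sum>i<d. real ((m' i + 2) * (m' i + 1)) * c (m'(i := m' i + 2))) = 0)"

text \<open>H_l: degree-l spherical harmonics (restrictions to the sphere of homogeneous harmonic
  polynomials of degree l; set to 0 off the sphere).\<close>
definition SH :: "nat \<Rightarrow> nat \<Rightarrow> ((nat \<Rightarrow> real) \<Rightarrow> real) set" where
  "SH d l = {f. \<exists>c. harm_coeffs d l c \<and>
      f = (\<lambda>x. if x \<in> sph d then (\<Sum>m\<in>mi d l. c m * (\<Prod>i<d. x i ^ m i)) else 0)}"

definition Ndim :: "nat \<Rightarrow> nat \<Rightarrow> nat" where
  "Ndim d l = vector_space.dim (\<lambda>a (f :: (nat \<Rightarrow> real) \<Rightarrow> real) x. a * f x) (SH d l)"

definition mu :: "nat \<Rightarrow> nat \<Rightarrow> real" where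
  "mu d l = (THE c. \<forall>Y\<in>SH d l. \<forall>x\<in>sph d. TK d Y x = c * Y x)"

definition m_sum :: "nat \<Rightarrow> nat \<Rightarrow> nat" where
  "m_sum d l = (\<Sum>l'\<le>l. Ndim d l')"

text \<open>f* = sum_{l<=k0} g_l with g_l in H_l (g_l = sum_j a_{lj} Y_{lj}, with {Y_{lj}}_j orthonormal
  in L^2(P), so sum_j a_{lj}^2 = ||g_l||^2_{L^2(P)}) and sum a_{lj}^2/mu_l <= gamma0^2.\<close>
definition target :: "nat \<Rightarrow> nat \<Rightarrow> real \<Rightarrow> ((nat \<Rightarrow> real) \<Rightarrow> real) \<Rightarrow> bool" where
  "target d k0 \<gamma>0 fs \<longleftrightarrow> (\<exists>g :: nat \<Rightarrow> (nat \<Rightarrow> real) \<Rightarrow> real.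
      (\<forall>l\<le>k0. g l \<in> SH d l) \<and> (\<forall>x\<in>sph d. fs x = (\<Sum>l\<le>k0. g l x)) \<and>
      (\<Sum>l\<le>k0. (\<integral>x. (g l x)^2 \<partial>unif_sphere d) / mu d l) \<le> \<gamma>0^2)"

definition gram :: "nat \<Rightarrow> nat \<Rightarrow> (nat \<Rightarrow> nat \<Rightarrow> real) \<Rightarrow> nat \<Rightarrow> nat \<Rightarrow> real" where
  "gram d n S i j = Kker d (S i) (S j) / real n"

definition eigdec :: "nat \<Rightarrow> (nat \<Rightarrow> nat \<Rightarrow> real) \<Rightarrow> (nat \<Rightarrow> nat \<Rightarrow> real) \<Rightarrow> (nat \<Rightarrow> real) \<Rightarrow> bool" where
  "eigdec n G U \<sigma> \<longleftrightarrow>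
     (\<forall>k<n. \<forall>l<n. (\<Sum>i<n. U i k * U i l) = (if k = l then 1 else 0)) \<and>
     (\<forall>k<n. \<forall>i<n. (\<Sum>j<n. G i j * U j k) = \<sigma> k * U i k) \<and>
     (\<forall>k l. k \<le> l \<longrightarrow> l < n \<longrightarrow> \<sigma> l \<le> \<sigma> k)"

text \<open>F(B_h, w, S, r0) = {h + e : h in H_K(B_h) \<inter> H_{S,r0}, ||e||_inf <= w}.
  h = sum_i K(.,x_i) alpha_i with alpha in Span(U^(r0)); its RKHS norm squared is
  sum_{i,j} alpha_i alpha_j K(x_i,x_j).\<close>
definition Fcls :: "nat \<Rightarrow> nat \<Rightarrow> (nat \<Rightarrow> nat \<Rightarrow> real) \<Rightarrow> (nat \<Rightarrow> nat \<Rightarrow> real) \<Rightarrow> nat \<Rightarrow> real \<Rightarrow> real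
    \<Rightarrow> ((nat \<Rightarrow> real) \<Rightarrow> real) set" where
  "Fcls d n S U r0 Bh w = {(\<lambda>x. (\<Sum>i<n. Kker d x (S i) * \<alpha> i) + e x) | \<alpha> e.
      (\<exists>c. \<forall>i<n. \<alpha> i = (\<Sum>k<r0. c k * U i k)) \<and>
      (\<Sum>i<n. \<Sum>j<n. \<alpha> i * \<alpha> j * Kker d (S i) (S j)) \<le> Bh^2 \<and>
      e \<in> borel_measurable (unif_sphere d) \<and> (\<forall>x\<in>sph d. \<bar>e x\<bar> \<le> w)}"

definition rademacher_signs :: "real measure" where
  "rademacher_signs = measure_pmf (pmf_of_set {-1, 1})"

text \<open>Empirical supremum (the supremum over the empty class is taken to be 0).\<close>
definition rad_sup :: "nat \<Rightarrow> ('a \<Rightarrow> real) set \<Rightarrow> (nat \<Rightarrow> 'a) \<times> (nat \<Rightarrow> real) \<Rightarrow> real" where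
  "rad_sup n F z = (if F = {} then 0 else Sup ((\<lambda>f. (\<Sum>i<n. snd z i * f (fst z i)) / real n) ` F))"

definition rad_measure :: "'a measure \<Rightarrow> nat \<Rightarrow> ((nat \<Rightarrow> 'a) \<times> (nat \<Rightarrow> real)) measure" where
  "rad_measure P n = PiM {..<n} (\<lambda>_. P) \<Otimes>\<^sub>M PiM {..<n} (\<lambda>_. rademacher_signs)"

definition rademacher :: "'a measure \<Rightarrow> nat \<Rightarrow> ('a \<Rightarrow> real) set \<Rightarrow> real" where
  "rademacher P n F = (\<integral>z. rad_sup n F z \<partial>rad_measure P n)"

definition loc_class :: "nat \<Rightarrow> nat \<Rightarrow> (nat \<Rightarrow> nat \<Rightarrow> real) \<Rightarrow> (nat \<Rightarrow> nat \<Rightarrow> real) \<Rightarrow> nat \<Rightarrow> real \<Rightarrow> real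
    \<Rightarrow> ((nat \<Rightarrow> real) \<Rightarrow> real) \<Rightarrow> real \<Rightarrow> ((nat \<Rightarrow> real) \<Rightarrow> real) set" where
  "loc_class d n S U r0 Bh w fs r = {(\<lambda>x. f x - fs x) | f. f \<in> Fcls d n S U r0 Bh w \<and>
      (\<integral>x. (f x - fs x)^2 \<partial>unif_sphere d) \<le> r}"

end

theory Submission
  imports Defs
begin

definition Nrm :: "nat \<Rightarrow> (nat \<Rightarrow> real) \<Rightarrow> real" where
  "Nrm d y = sqrt (\<Sum>i<d. (y i)^2)"

definition nrmz :: "nat \<Rightarrow> (nat \<Rightarrow> real) \<Rightarrow> (nat \<Rightarrow> real)" where
  "nrmz d y = (\<lambda>i\<in>{..<d}. y i / Nrm d y)"

lemma space_lebesgue_d: "space (lebesgue_d d) = {..<d} \<rightarrow>\<^sub>E UNIV"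
  by (simp add: lebesgue_d_def space_PiM)

lemma sph_alt: "sph d = {x \<in> space (lebesgue_d d). (\<Sum>i<d. (x i)^2) = 1}"
  by (simp add: sph_def space_lebesgue_d)

lemma sph_sets: "sph d \<in> sets (lebesgue_d d)"
  unfolding sph_alt unfolding lebesgue_d_def by measurable

lemma Nrm_meas[measurable]: "Nrm d \<in> borel_measurable (lebesgue_d d)"
  unfolding Nrm_def lebesgue_d_def by measurable

lemma nrmz_meas: "nrmz d \<in> measurable (lebesgue_d d) (lebesgue_d d)"
  unfolding nrmz_def lebesgue_d_def
  by (rule measurable_restrict) (use Nrm_meas[unfolded lebesgue_d_def] in measurable)

lemma Nrm_scale:
  assumes "x \<in> sph d" "0 < t"
  shows "Nrm d (\<lambda>i\<in>{..<d}. t * x i) = t"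
proof -
  have "(\<Sum>i<d. ((\<lambda>i\<in>{..<d}. t * x i) i)^2) = t^2 * (\<Sum>i<d. (x i)^2)"
    by (simp add: sum_distrib_left power_mult_distrib)
  also have "\<dots> = t^2" using assms by (simp add: sph_def)
  finally show ?thesis using assms by (simp add: Nrm_def)
qed

lemma cone_char:
  assumes "A \<subseteq> sph d"
  shows "cone d A = {y \<in> space (lebesgue_d d). 0 < Nrm d y \<and> Nrm d y \<le> 1 \<and> nrmz d y \<in> A}"
proof (intro set_eqI iffI)
  fix y assume "y \<in> cone d A"
  then obtain t x where y: "y = (\<lambda>i\<in>{..<d}. t * x i)" "0 < t" "t \<le> 1" "x \<in> A"
    by (auto simp: cone_def)
  have xs: "x \<in> sph d" using y assms by auto
  have N: "Nrm d y = t" using Nrm_scale[OF xs y(2)] y by simp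
  have "nrmz d y = x"
  proof -
    have t: "t \<noteq> 0" using y(2) by simp
    show ?thesis
    using xs t unfolding nrmz_def N by (auto simp: y sph_def PiE_def extensional_def fun_eq_iff)
  qed
  then show "y \<in> {y \<in> space (lebesgue_d d). 0 < Nrm d y \<and> Nrm d y \<le> 1 \<and> nrmz d y \<in> A}"
    using y N by (auto simp: space_lebesgue_d)
next
  fix y assume "y \<in> {y \<in> space (lebesgue_d d). 0 < Nrm d y \<and> Nrm d y \<le> 1 \<and> nrmz d y \<in> A}"
  then have y: "y \<in> {..<d} \<rightarrow>\<^sub>E UNIV" "0 < Nrm d y" "Nrm d y \<le> 1" "nrmz d y \<in> A"
    by (auto simp: space_lebesgue_d)
  have "y = (\<lambda>i\<in>{..<d}. Nrm d y * nrmz d y i)"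
    using y(1,2) by (auto simp: nrmz_def PiE_def extensional_def fun_eq_iff)
  then show "y \<in> cone d A" unfolding cone_def using y by blast
qed

lemma cone_sets:
  assumes "A \<in> sets (lebesgue_d d)" "A \<subseteq> sph d"
  shows "cone d A \<in> sets (lebesgue_d d)"
proof -
  have "cone d A = {y \<in> space (lebesgue_d d). 0 < Nrm d y \<and> Nrm d y \<le> 1} \<inter> (nrmz d -` A \<inter> space (lebesgue_d d))"
    using cone_char[OF assms(2)] by auto
  moreover have "{y \<in> space (lebesgue_d d). 0 < Nrm d y \<and> Nrm d y \<le> 1} \<in> sets (lebesgue_d d)"
    by measurable
  moreover have "nrmz d -` A \<inter> space (lebesgue_d d) \<in> sets (lebesgue_d d)"
    using measurable_sets[OF nrmz_meas assms(1)] .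
  ultimately show ?thesis by auto
qed

interpretation lb: product_sigma_finite "\<lambda>_::nat. lborel"
  by (simp add: product_sigma_finite_def lborel.sigma_finite_measure_axioms)

lemma cone_Un: "cone d (\<Union>i. A i) = (\<Union>i. cone d (A i))"
  unfolding cone_def by blast

lemma cone_sph_char: "cone d (sph d) = {y \<in> space (lebesgue_d d). 0 < Nrm d y \<and> Nrm d y \<le> 1}"
proof -
  have "nrmz d y \<in> sph d" if "0 < Nrm d y" for y
  proof -
    have "(\<Sum>i<d. (y i / Nrm d y)^2) = (\<Sum>i<d. (y i)^2) / (Nrm d y)^2"
      by (simp add: power_divide sum_divide_distrib)
    also have "\<dots> = 1"
    proof -
      have "(Nrm d y)^2 = (\<Sum>i<d. (y i)^2)" by (simp add: Nrm_def sum_nonneg)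
      moreover have "(Nrm d y)^2 > 0" using that by simp
      ultimately show ?thesis by simp
    qed
    finally show ?thesis by (simp add: sph_def nrmz_def)
  qed
  then show ?thesis using cone_char[of "sph d" d] by auto
qed

lemma coord_le_Nrm: "i < d \<Longrightarrow> \<bar>y i\<bar> \<le> Nrm d y"
proof -
  assume i: "i < d"
  have "(y i)^2 \<le> (\<Sum>j<d. (y j)^2)"
    using i by (intro member_le_sum) auto
  then have "sqrt ((y i)^2) \<le> Nrm d y" unfolding Nrm_def by (rule real_sqrt_le_mono)
  then show ?thesis by simp
qed

lemma cone_sph_fin: "emeasure (lebesgue_d d) (cone d (sph d)) < \<infinity>"
proof -
  have "cone d (sph d) \<subseteq> Pi\<^sub>E {..<d} (\<lambda>_. {-1..1})"
    unfolding cone_sph_char space_lebesgue_d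
  proof
    fix y assume y: "y \<in> {y \<in> {..<d} \<rightarrow>\<^sub>E UNIV. 0 < Nrm d y \<and> Nrm d y \<le> 1}"
    have "\<bar>y i\<bar> \<le> 1" if "i < d" for i using coord_le_Nrm[OF that, of y] y by auto
    then show "y \<in> Pi\<^sub>E {..<d} (\<lambda>_. {-1..1})" using y by (auto simp: PiE_def Pi_def abs_le_iff)
  qed
  then have "emeasure (lebesgue_d d) (cone d (sph d)) \<le> emeasure (lebesgue_d d) (Pi\<^sub>E {..<d} (\<lambda>_. {-1..1}))"
    by (intro emeasure_mono) (auto simp: lebesgue_d_def)
  also have "\<dots> = (\<Prod>i<d. emeasure lborel {-1..(1::real)})"
    unfolding lebesgue_d_def by (rule lb.emeasure_PiM) auto
  also have "\<dots> < \<infinity>" 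
  proof -
    have "(\<Prod>i<d. emeasure lborel {-1..(1::real)}) = ennreal (2^d)"
      using ennreal_power[of 2 d] by simp
    then show ?thesis by simp
  qed
  finally show ?thesis .
qed

lemma cone_sph_pos: assumes "d \<ge> 1" shows "0 < emeasure (lebesgue_d d) (cone d (sph d))"
proof -
  have "Pi\<^sub>E {..<d} (\<lambda>_. {0<..1/real d}) \<subseteq> cone d (sph d)"
  proof
    fix y assume y: "y \<in> Pi\<^sub>E {..<d} (\<lambda>_. {0<..1/real d})"
    have "(\<Sum>i<d. (y i)^2) \<le> (\<Sum>i<d. (1/real d)^2)"
      using y by (intro sum_mono power_mono) (auto simp: PiE_def Pi_def less_imp_le)
    also have "\<dots> = 1 / real d" using assms by (simp add: power2_eq_square)
    also have "\<dots> \<le> 1" using assms by simp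
    finally have le: "(\<Sum>i<d. (y i)^2) \<le> 1" .
    have "0 < (y 0)^2" using y assms by (auto simp: PiE_def Pi_def)
    also have "(y 0)^2 \<le> (\<Sum>i<d. (y i)^2)" using assms by (intro member_le_sum) auto
    finally have "0 < (\<Sum>i<d. (y i)^2)" .
    then show "y \<in> cone d (sph d)" unfolding cone_sph_char Nrm_def space_lebesgue_d
      using le y by (auto simp: PiE_def Pi_def)
  qed
  then have "emeasure (lebesgue_d d) (Pi\<^sub>E {..<d} (\<lambda>_. {0<..1/real d})) \<le> emeasure (lebesgue_d d) (cone d (sph d))"
    by (intro emeasure_mono cone_sets sph_sets) auto
  moreover have "emeasure (lebesgue_d d) (Pi\<^sub>E {..<d} (\<lambda>_. {0<..1/real d})) = (\<Prod>i<d. emeasure lborel {0<..1/real d})"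
    unfolding lebesgue_d_def by (rule lb.emeasure_PiM) auto
  moreover have "0 < (\<Prod>i<d. emeasure lborel {0<..1/real d})"
  proof -
    have "(\<Prod>i<d. emeasure lborel {0<..1/real d}) = ennreal ((1/real d)^d)"
      by (simp add: ennreal_power)
    also have "\<dots> > 0" using assms by simp
    finally show ?thesis .
  qed
  ultimately show ?thesis by simp
qed

definition usets :: "nat \<Rightarrow> (nat \<Rightarrow> real) set set" where
  "usets d = {A \<in> sets (lebesgue_d d). A \<subseteq> sph d}"

lemma usets_restrict: "usets d = sets (restrict_space (lebesgue_d d) (sph d))"
  using sets_restrict_space_iff[of "sph d" "lebesgue_d d"] sph_sets[of d]
  by (auto simp: usets_def Int_absorb2 sets.sets_into_space)

lemma usets_sigma: "sigma_algebra (sph d) (usets d)"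
proof -
  have "space (restrict_space (lebesgue_d d) (sph d)) = sph d"
    using sets.sets_into_space[OF sph_sets[of d]] by (auto simp: space_restrict_space)
  then show ?thesis
    using sets.sigma_algebra_axioms[of "restrict_space (lebesgue_d d) (sph d)"] usets_restrict by simp
qed

lemma sets_unif: "sets (unif_sphere d) = usets d"
  unfolding unif_sphere_def usets_def[symmetric]
  using usets_sigma by (simp add: sigma_algebra.sets_measure_of_eq)

lemma space_unif: "space (unif_sphere d) = sph d"
  unfolding unif_sphere_def usets_def[symmetric]
  using usets_sigma by (simp add: sigma_algebra.space_measure_of_eq)

lemma emeasure_unif:
  assumes "d \<ge> 1" "A \<in> usets d"
  shows "emeasure (unif_sphere d) A = emeasure (lebesgue_d d) (cone d A) / emeasure (lebesgue_d d) (cone d (sph d))"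
  unfolding unif_sphere_def usets_def[symmetric]
proof (rule emeasure_measure_of_sigma[OF usets_sigma _ _ assms(2)])
  show "positive (usets d) (\<lambda>A. emeasure (lebesgue_d d) (cone d A) / emeasure (lebesgue_d d) (cone d (sph d)))"
    by (auto simp: positive_def cone_def)
  show "countably_additive (usets d) (\<lambda>A. emeasure (lebesgue_d d) (cone d A) / emeasure (lebesgue_d d) (cone d (sph d)))"
  proof (rule countably_additiveI)
    fix A :: "nat \<Rightarrow> _" assume A: "range A \<subseteq> usets d" "disjoint_family A" "\<Union> (range A) \<in> usets d"
    have cs: "range (\<lambda>i. cone d (A i)) \<subseteq> sets (lebesgue_d d)"
      using A(1) by (auto simp: usets_def intro!: cone_sets)
    have dj: "disjoint_family (\<lambda>i. cone d (A i))"
      unfolding disjoint_family_on_def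
    proof (intro ballI impI)
      fix i j :: nat assume "i \<noteq> j"
      then have "A i \<inter> A j = {}" using A(2) by (auto simp: disjoint_family_on_def)
      moreover have "A i \<subseteq> sph d" "A j \<subseteq> sph d" using A(1) by (auto simp: usets_def)
      ultimately show "cone d (A i) \<inter> cone d (A j) = {}"
        using cone_char[of "A i" d] cone_char[of "A j" d] by auto
    qed
    show "(\<Sum>i. emeasure (lebesgue_d d) (cone d (A i)) / emeasure (lebesgue_d d) (cone d (sph d))) =
      emeasure (lebesgue_d d) (cone d (\<Union> (range A))) / emeasure (lebesgue_d d) (cone d (sph d))"
      by (simp add: cone_Un suminf_emeasure[OF cs dj])
  qed
qed

lemma prob_unif: assumes "d \<ge> 1" shows "prob_space (unif_sphere d)"
proof
  have "sph d \<in> usets d" using sph_sets by (auto simp: usets_def)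
  then show "emeasure (unif_sphere d) (space (unif_sphere d)) = 1"
    using emeasure_unif[OF assms] cone_sph_fin[of d] cone_sph_pos[OF assms]
    by (simp add: space_unif)
qed

lemma hyper_sets:
  assumes "a < d" "b < d"
  shows "{y \<in> space (lebesgue_d d). y a * pb = y b * pa} \<in> sets (lebesgue_d d)"
proof -
  have [measurable]: "(\<lambda>y. y a) \<in> borel_measurable (lebesgue_d d)" "(\<lambda>y. y b) \<in> borel_measurable (lebesgue_d d)"
    unfolding lebesgue_d_def using assms by (auto intro!: measurable_component_singleton)
  show ?thesis by measurable
qed

lemma hyper_null:
  assumes "a < d" "b < d" "a \<noteq> b" "pa \<noteq> 0"
  shows "emeasure (lebesgue_d d) {y \<in> space (lebesgue_d d). y a * pb = y b * pa} = 0"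
    (is "emeasure _ ?T = 0")
proof -
  define I where "I = {..<d} - {b}"
  have dI: "{..<d} = insert b I" "b \<notin> I" "finite I" using assms by (auto simp: I_def)
  have [measurable]: "(\<lambda>y. y a) \<in> borel_measurable (lebesgue_d d)" "(\<lambda>y. y b) \<in> borel_measurable (lebesgue_d d)"
    unfolding lebesgue_d_def using assms by (auto intro!: measurable_component_singleton)
  have Tm: "?T \<in> sets (lebesgue_d d)" by measurable
  have "emeasure (lebesgue_d d) ?T = (\<integral>\<^sup>+ y. indicator ?T y \<partial>lebesgue_d d)"
    using Tm by simp
  also have "\<dots> = (\<integral>\<^sup>+ x. (\<integral>\<^sup>+ y. indicator ?T (x(b := y)) \<partial>lborel) \<partial>(Pi\<^sub>M I (\<lambda>_. lborel)))"
    unfolding lebesgue_d_def dI(1)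
    by (rule lb.product_nn_integral_insert[OF dI(3) dI(2)]) (use Tm[unfolded lebesgue_d_def dI(1)] in simp)
  also have "\<dots> = 0"
  proof -
    have inner: "(\<integral>\<^sup>+ y. indicator ?T (x(b := y)) \<partial>lborel) = 0" for x :: "nat \<Rightarrow> real"
    proof -
      have "(\<integral>\<^sup>+ y. indicator ?T (x(b := y)) \<partial>lborel) \<le> (\<integral>\<^sup>+ y. indicator {x a * pb / pa} y \<partial>lborel)"
        using assms by (intro nn_integral_mono) (auto simp: indicator_def field_simps)
      also have "\<dots> = 0" by simp
      finally show ?thesis by simp
    qed
    show ?thesis by (simp add: inner)
  qed
  finally show ?thesis by simp
qed

lemma singleton_usets: assumes "p \<in> sph d" shows "{p} \<in> usets d"
proof -
  have "{p} = Pi\<^sub>E {..<d} (\<lambda>i. {p i})"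
  proof (intro set_eqI iffI)
    fix x assume "x \<in> Pi\<^sub>E {..<d} (\<lambda>i. {p i})"
    then have "x i = p i" for i using assms
      by (cases "i < d") (auto simp: sph_def PiE_def Pi_def extensional_def)
    then show "x \<in> {p}" by auto
  qed (use assms in \<open>auto simp: sph_def\<close>)
  also have "\<dots> \<in> sets (lebesgue_d d)" unfolding lebesgue_d_def
    by (rule sets_PiM_I_finite) auto
  finally show ?thesis using assms by (auto simp: usets_def)
qed

lemma no_atom:
  assumes "d \<ge> 2" "p \<in> sph d"
  shows "emeasure (unif_sphere d) {p} = 0"
proof -
  have "\<exists>a<d. p a \<noteq> 0"
  proof (rule ccontr)
    assume "\<not> ?thesis"
    then have "\<forall>a<d. p a = 0" by blast
    then have "(\<Sum>i<d. (p i)^2) = 0" by simp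
    then show False using assms by (simp add: sph_def)
  qed
  then obtain a where a: "a < d" "p a \<noteq> 0" by blast
  define b where "b = (if a = 0 then 1 else (0::nat))"
  have b: "b < d" "a \<noteq> b" using assms a by (auto simp: b_def)
  have "cone d {p} \<subseteq> {y \<in> space (lebesgue_d d). y a * p b = y b * p a}"
    using a b by (auto simp: cone_def space_lebesgue_d PiE_def extensional_def)
  then have "emeasure (lebesgue_d d) (cone d {p}) \<le> emeasure (lebesgue_d d) {y \<in> space (lebesgue_d d). y a * p b = y b * p a}"
    by (intro emeasure_mono) (use a b in \<open>auto intro!: hyper_sets\<close>)
  also have "\<dots> = 0" using hyper_null[OF a(1) b(1) b(2) a(2)] .
  finally have "emeasure (lebesgue_d d) (cone d {p}) = 0" by simp
  then show ?thesis using emeasure_unif[of d "{p}"] singleton_usets[OF assms(2)] assms(1) by simp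
qed

lemma Sup_real_ub_eq:
  fixes X Y :: "real set"
  assumes "\<And>u. (\<forall>x\<in>X. x \<le> u) \<longleftrightarrow> (\<forall>y\<in>Y. y \<le> u)"
  shows "Sup X = Sup Y"
  unfolding Sup_real_def using assms by simp

lemma meas_Sup_nat:
  fixes F :: "nat \<Rightarrow> 'a \<Rightarrow> real"
  assumes [measurable]: "\<And>k. F k \<in> borel_measurable M"
  shows "(\<lambda>z. Sup (range (\<lambda>k. F k z))) \<in> borel_measurable M"
proof -
  define B where "B = {z \<in> space M. \<exists>N::nat. \<forall>k. F k z \<le> real N}"
  have Bm[measurable]: "B \<in> sets M" unfolding B_def by measurable
  have bddB: "bdd_above (range (\<lambda>k. F k z)) \<longleftrightarrow> (\<exists>N::nat. \<forall>k. F k z \<le> real N)" for z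
  proof
    assume "bdd_above (range (\<lambda>k. F k z))"
    then obtain u where "\<forall>k. F k z \<le> u" by (auto simp: bdd_above_def)
    moreover obtain N :: nat where "u \<le> real N" using real_arch_simple by blast
    ultimately show "\<exists>N::nat. \<forall>k. F k z \<le> real N" by (meson order_trans)
  qed (auto simp: bdd_above_def)
  define F' where "F' k z = indicator B z * F k z" for k z
  have Fm[measurable]: "F' k \<in> borel_measurable M" for k unfolding F'_def
    by (intro borel_measurable_times borel_measurable_indicator Bm assms)
  have m1: "(\<lambda>z. SUP k. F' k z) \<in> borel_measurable M"
    by (rule borel_measurable_cSUP) (simp, rule Fm, auto simp: F'_def B_def bddB[symmetric] bdd_above_def indicator_def)
  have m2: "(\<lambda>z. if z \<in> B then (SUP k. F' k z) else Sup (UNIV::real set)) \<in> borel_measurable M"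
    using m1 by measurable
  have eq: "Sup (range (\<lambda>k. F k z)) = (if z \<in> B then (SUP k. F' k z) else Sup (UNIV::real set))"
    if z: "z \<in> space M" for z
  proof (cases "z \<in> B")
    case True
    then show ?thesis by (simp add: F'_def)
  next
    case False
    then have nb: "\<not> bdd_above (range (\<lambda>k. F k z))" using z bddB by (auto simp: B_def)
    have "Sup (range (\<lambda>k. F k z)) = Sup (UNIV::real set)"
    proof (rule Sup_real_ub_eq)
      fix u
      have "\<not> (\<forall>x\<in>range (\<lambda>k. F k z). x \<le> u)" using nb by (auto simp: bdd_above_def)
      moreover have "\<not> (\<forall>y\<in>(UNIV::real set). y \<le> u)" by (metis UNIV_I gt_ex leD)
      ultimately show "(\<forall>x\<in>range (\<lambda>k. F k z). x \<le> u) = (\<forall>y\<in>UNIV. y \<le> u)" by blast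
    qed
    then show ?thesis using False by simp
  qed
  have "(\<lambda>z. Sup (range (\<lambda>k. F k z))) \<in> borel_measurable M \<longleftrightarrow>
     (\<lambda>z. if z \<in> B then (SUP k. F' k z) else Sup (UNIV::real set)) \<in> borel_measurable M"
    by (rule measurable_cong) (rule eq)
  then show ?thesis using m2 by simp
qed

lemma (in finite_measure) CS_integral:
  fixes f g :: "'a \<Rightarrow> real"
  assumes [measurable]: "f \<in> borel_measurable M" "g \<in> borel_measurable M"
    and i: "integrable M (\<lambda>x. (f x)^2)" "integrable M (\<lambda>x. (g x)^2)" "integrable M (\<lambda>x. f x * g x)"
  shows "(\<integral>x. f x * g x \<partial>M) \<le> sqrt (\<integral>x. (f x)^2 \<partial>M) * sqrt (\<integral>x. (g x)^2 \<partial>M)"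
proof -
  define A where "A = (\<integral>x. (f x)^2 \<partial>M)"
  define B where "B = (\<integral>x. (g x)^2 \<partial>M)"
  have A0: "A \<ge> 0" "B \<ge> 0" unfolding A_def B_def by auto
  show ?thesis
  proof (cases "A = 0 \<or> B = 0")
    case True
    then have "AE x in M. f x * g x = 0"
    proof
      assume "A = 0"
      then have "AE x in M. (f x)^2 = 0" using i(1) unfolding A_def
        by (subst integral_nonneg_eq_0_iff_AE[symmetric]) auto
      then show ?thesis by eventually_elim simp
    next
      assume "B = 0"
      then have "AE x in M. (g x)^2 = 0" using i(2) unfolding B_def
        by (subst integral_nonneg_eq_0_iff_AE[symmetric]) auto
      then show ?thesis by eventually_elim simp
    qed
    then have "(\<integral>x. f x * g x \<partial>M) = (\<integral>x. 0 \<partial>M)"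
      using integral_cong_AE[of "\<lambda>x. f x * g x" M "\<lambda>x. 0"] by auto
    then show ?thesis using A0 by (simp add: A_def[symmetric] B_def[symmetric])
  next
    case False
    then have pos: "A > 0" "B > 0" using A0 by auto
    define t where "t = sqrt B / sqrt A"
    have t: "t > 0" using pos by (simp add: t_def)
    have pw: "f x * g x \<le> (t * (f x)^2 + (g x)^2 / t) / 2" for x
    proof -
      have "0 \<le> (t * f x - g x)^2 / t" using t by simp
      also have "(t * f x - g x)^2 / t = t * (f x)^2 + (g x)^2 / t - 2 * (f x * g x)"
        using t by (simp add: power2_eq_square field_simps)
      finally show ?thesis by simp
    qed
    have "(\<integral>x. f x * g x \<partial>M) \<le> (\<integral>x. (t * (f x)^2 + (g x)^2 / t) / 2 \<partial>M)"
      using i by (intro integral_mono pw) auto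
    also have "\<dots> = (t * A + B / t) / 2"
      using i by (simp add: A_def B_def)
    also have "\<dots> = sqrt A * sqrt B"
    proof -
      have sA: "A = sqrt A * sqrt A" "B = sqrt B * sqrt B" using pos by simp_all
      have sp: "sqrt A > 0" "sqrt B > 0" using pos by simp_all
      have "t * A = sqrt A * sqrt B" unfolding t_def using sp
        by (subst sA(1)) (simp add: field_simps)
      moreover have "B / t = sqrt A * sqrt B" unfolding t_def using sp
        by (subst sA(2)) (simp add: field_simps)
      ultimately show ?thesis by simp
    qed
    finally show ?thesis by (simp add: A_def B_def)
  qed
qed

definition bm :: "'a measure \<Rightarrow> ('a \<Rightarrow> real) \<Rightarrow> bool" where
  "bm M f \<longleftrightarrow> f \<in> borel_measurable M \<and> (\<exists>B. \<forall>x\<in>space M. \<bar>f x\<bar> \<le> B)"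

lemma bm_meas[measurable_dest]: "bm M f \<Longrightarrow> f \<in> borel_measurable M"
  by (simp add: bm_def)

lemma (in finite_measure) bm_integrable: "bm M f \<Longrightarrow> integrable M f"
proof -
  assume "bm M f"
  then obtain B where "f \<in> borel_measurable M" "\<forall>x\<in>space M. \<bar>f x\<bar> \<le> B" by (auto simp: bm_def)
  then show ?thesis by (intro integrable_const_bound[where B=B]) auto
qed

lemma bm_const[simp]: "bm M (\<lambda>x. c)"
  by (auto simp: bm_def)

lemma bm_mult: assumes "bm M f" "bm M g" shows "bm M (\<lambda>x. f x * g x)"
proof -
  obtain B1 B2 where b: "\<forall>x\<in>space M. \<bar>f x\<bar> \<le> B1" "\<forall>x\<in>space M. \<bar>g x\<bar> \<le> B2"
    using assms by (auto simp: bm_def)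
  have "\<forall>x\<in>space M. \<bar>f x * g x\<bar> \<le> B1 * B2"
    using b by (auto simp: abs_mult intro!: mult_mono)
  then show ?thesis using assms by (auto simp: bm_def)
qed

lemma bm_add: assumes "bm M f" "bm M g" shows "bm M (\<lambda>x. f x + g x)"
proof -
  obtain B1 B2 where b: "\<forall>x\<in>space M. \<bar>f x\<bar> \<le> B1" "\<forall>x\<in>space M. \<bar>g x\<bar> \<le> B2"
    using assms by (auto simp: bm_def)
  have "\<forall>x\<in>space M. \<bar>f x + g x\<bar> \<le> B1 + B2"
    using b by (auto intro!: abs_triangle_ineq[THEN order_trans] add_mono)
  then show ?thesis using assms by (auto simp: bm_def)
qed

lemma bm_minus: assumes "bm M f" shows "bm M (\<lambda>x. - f x)"
  using assms by (auto simp: bm_def)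

lemma bm_diff: assumes "bm M f" "bm M g" shows "bm M (\<lambda>x. f x - g x)"
  using bm_add[OF assms(1) bm_minus[OF assms(2)]] by simp

lemma bm_sum: assumes "\<And>i. i \<in> I \<Longrightarrow> bm M (f i)" shows "bm M (\<lambda>x. \<Sum>i\<in>I. f i x)"
proof (cases "finite I")
  case True
  then show ?thesis using assms
    by (induction I rule: finite_induct) (auto intro!: bm_add)
qed simp

lemma bm_cmult: "bm M f \<Longrightarrow> bm M (\<lambda>x. c * f x)"
  using bm_mult[OF bm_const] by blast

lemma bm_sq: "bm M f \<Longrightarrow> bm M (\<lambda>x. (f x)^2)"
  using bm_mult[of M f f] by (simp add: power2_eq_square)

lemmas bm_intros = bm_mult bm_add bm_diff bm_sum bm_cmult bm_sq bm_const bm_minus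

lemma (in prob_space) gram_schmidt:
  fixes K :: nat and \<psi> :: "nat \<Rightarrow> 'a \<Rightarrow> real"
  assumes "\<And>k. k < K \<Longrightarrow> bm M (\<psi> k)"
  shows "\<exists>m \<phi> A. m \<le> K \<and> (\<forall>l<m. bm M (\<phi> l)) \<and>
     (\<forall>l<m. \<forall>l'<m. (\<integral>x. \<phi> l x * \<phi> l' x \<partial>M) = (if l = l' then 1 else 0)) \<and>
     (\<forall>k<K. AE x in M. \<psi> k x = (\<Sum>l<m. A k l * \<phi> l x))"
  using assms
proof (induction K)
  case 0
  show ?case by (intro exI[of _ 0]) auto
next
  case (Suc K)
  have pr: "\<And>k. k < K \<Longrightarrow> bm M (\<psi> k)" using Suc.prems by simp
  obtain m \<phi> A where IH: "m \<le> K" "\<forall>l<m. bm M (\<phi> l)"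
     "\<forall>l<m. \<forall>l'<m. (\<integral>x. \<phi> l x * \<phi> l' x \<partial>M) = (if l = l' then 1 else 0)"
     "\<forall>k<K. AE x in M. \<psi> k x = (\<Sum>l<m. A k l * \<phi> l x)"
    using Suc.IH[OF pr] by blast
  have bK: "bm M (\<psi> K)" using Suc by simp
  define a where "a l = (\<integral>x. \<psi> K x * \<phi> l x \<partial>M)" for l
  define \<rho> where "\<rho> x = \<psi> K x - (\<Sum>l<m. a l * \<phi> l x)" for x
  have b\<rho>: "bm M \<rho>" unfolding \<rho>_def using bK IH(2) by (auto intro!: bm_intros)
  have orth: "(\<integral>x. \<rho> x * \<phi> l x \<partial>M) = 0" if l: "l < m" for l
  proof -
    have "(\<integral>x. \<rho> x * \<phi> l x \<partial>M) = (\<integral>x. \<psi> K x * \<phi> l x - (\<Sum>l'<m. a l' * (\<phi> l' x * \<phi> l x)) \<partial>M)"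
      unfolding \<rho>_def by (simp add: left_diff_distrib sum_distrib_right mult.assoc)
    also have "\<dots> = a l - (\<Sum>l'<m. a l' * (\<integral>x. \<phi> l' x * \<phi> l x \<partial>M))"

    proof -
      have i1: "integrable M (\<lambda>x. \<psi> K x * \<phi> l x)" using bK IH(2) l by (auto intro!: bm_integrable bm_intros)
      have i3: "integrable M (\<lambda>x. a l' * (\<phi> l' x * \<phi> l x))" if "l' < m" for l'
        using IH(2) l that by (auto intro!: bm_integrable bm_intros)
      have i2: "integrable M (\<lambda>x. \<Sum>l'<m. a l' * (\<phi> l' x * \<phi> l x))" using i3 by auto
      show ?thesis
        using Bochner_Integration.integral_diff[OF i1 i2] Bochner_Integration.integral_sum[where I="{..<m}" and f="\<lambda>l' x. a l' * (\<phi> l' x * \<phi> l x)", OF i3]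
        by (simp add: a_def)
    qed
    also have "\<dots> = a l - (\<Sum>l'<m. (if l' = l then a l' else 0))"
      using IH(3) l by (intro arg_cong2[where f="(-)"] sum.cong) auto
    also have "\<dots> = 0" using l by simp
    finally show ?thesis .
  qed
  define N where "N = (\<integral>x. (\<rho> x)^2 \<partial>M)"
  have N0: "N \<ge> 0" unfolding N_def by simp
  show ?case
  proof (cases "N = 0")
    case True
    have "AE x in M. (\<rho> x)^2 = 0" using True b\<rho> unfolding N_def
      by (subst integral_nonneg_eq_0_iff_AE[symmetric]) (auto intro!: bm_integrable bm_intros)
    then have aeK: "AE x in M. \<psi> K x = (\<Sum>l<m. a l * \<phi> l x)"
      by eventually_elim (simp add: \<rho>_def)
    show ?thesis
    proof (intro exI conjI)
      show "m \<le> Suc K" using IH by simp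
      show "\<forall>k<Suc K. AE x in M. \<psi> k x = (\<Sum>l<m. (A(K := a)) k l * \<phi> l x)"
        using IH(4) aeK by (auto simp: less_Suc_eq)
    qed (use IH in \<open>simp_all\<close>)
  next
    case False
    then have Np: "N > 0" using N0 by simp
    define s where "s = sqrt N"
    have s: "s > 0" "s * s = N" using Np by (auto simp: s_def)
    define \<phi>' where "\<phi>' = \<phi>(m := (\<lambda>x. \<rho> x / s))"
    define A' where "A' k l = (if k = K then (if l < m then a l else s) else (if l < m then A k l else 0))" for k l
    show ?thesis
    proof (intro exI conjI)
      show "Suc m \<le> Suc K" using IH by simp
      show bmp: "\<forall>l<Suc m. bm M (\<phi>' l)"

        using IH(2) b\<rho> by (auto simp: \<phi>'_def less_Suc_eq divide_inverse intro!: bm_intros)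
      show "\<forall>k<Suc K. AE x in M. \<psi> k x = (\<Sum>l<Suc m. A' k l * \<phi>' l x)"
      proof (intro allI impI)
        fix k assume k: "k < Suc K"
        show "AE x in M. \<psi> k x = (\<Sum>l<Suc m. A' k l * \<phi>' l x)"
        proof (cases "k = K")
          case True
          have "\<psi> k x = (\<Sum>l<Suc m. A' k l * \<phi>' l x)" for x
            using s True by (simp add: A'_def \<phi>'_def \<rho>_def)
          then show ?thesis by simp
        next
          case False
          then have "k < K" using k by simp
          have eq: "(\<Sum>l<Suc m. A' k l * \<phi>' l x) = (\<Sum>l<m. A k l * \<phi> l x)" for x
            using False by (simp add: A'_def \<phi>'_def)
          from \<open>k < K\<close> IH(4) have "AE x in M. \<psi> k x = (\<Sum>l<m. A k l * \<phi> l x)" by blast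
          then show ?thesis by eventually_elim (simp only: eq)
        qed
      qed
      show "\<forall>l<Suc m. \<forall>l'<Suc m. (\<integral>x. \<phi>' l x * \<phi>' l' x \<partial>M) = (if l = l' then 1 else 0)"
      proof (intro allI impI)
        fix l l' assume l: "l < Suc m" "l' < Suc m"
        have nn: "(\<integral>x. \<rho> x / s * (\<rho> x / s) \<partial>M) = 1"
        proof -
          have "(\<integral>x. \<rho> x / s * (\<rho> x / s) \<partial>M) = (\<integral>x. (\<rho> x)^2 \<partial>M) / (s * s)"
            by (simp add: power2_eq_square)
          then show ?thesis using s Np by (simp add: N_def)
        qed
        have o1: "(\<integral>x. \<rho> x / s * \<phi> j x \<partial>M) = 0" if "j < m" for j
          using orth[OF that] by simp
        have o2: "(\<integral>x. \<phi> j x * (\<rho> x / s) \<partial>M) = 0" if "j < m" for j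
          using orth[OF that] by (simp add: mult.commute)
        show "(\<integral>x. \<phi>' l x * \<phi>' l' x \<partial>M) = (if l = l' then 1 else 0)"

          using l IH(3) nn o1 o2 by (auto simp: \<phi>'_def less_Suc_eq)
      qed
    qed
  qed
qed

lemma pim1:
  fixes f :: "'a \<Rightarrow> real" and n :: nat
  assumes "prob_space M" "i < n" "integrable M f"
  shows "(\<integral>x. f (x i) \<partial>PiM {..<n} (\<lambda>_. M)) = (\<integral>x. f x \<partial>M)"
proof -
  have "distr (PiM {..<n} (\<lambda>_. M)) M (\<lambda>\<omega>. \<omega> i) = M"
    using distr_PiM_component[of "{..<n}" "\<lambda>_. M" i] assms by simp
  then have "(\<integral>x. f x \<partial>M) = (\<integral>x. f x \<partial>distr (PiM {..<n} (\<lambda>_. M)) M (\<lambda>\<omega>. \<omega> i))" by simp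
  also have "\<dots> = (\<integral>x. f (x i) \<partial>PiM {..<n} (\<lambda>_. M))"
    using assms by (intro integral_distr) (auto intro!: measurable_component_singleton)
  finally show ?thesis by simp
qed

lemma pim2:
  fixes f g :: "'a \<Rightarrow> real" and n :: nat
  assumes M: "prob_space M" and ij: "i < n" "j < n" "i \<noteq> j" and fg: "integrable M f" "integrable M g"
  shows "(\<integral>x. f (x i) * g (x j) \<partial>PiM {..<n} (\<lambda>_. M)) = (\<integral>x. f x \<partial>M) * (\<integral>x. g x \<partial>M)"
proof -
  interpret ps: product_sigma_finite "\<lambda>_::nat. M"
    using M by (simp add: product_sigma_finite_def prob_space_imp_sigma_finite)
  interpret prob_space M by fact
  define F where "F k t = (if k = i then f t else 1) * (if k = j then g t else 1)" for k t
  have Fi: "F i = f" "F j = g" using ij by (auto simp: F_def fun_eq_iff)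
  have Fo: "k \<noteq> i \<Longrightarrow> k \<noteq> j \<Longrightarrow> F k = (\<lambda>_. 1)" for k by (simp add: F_def fun_eq_iff)
  have iF: "integrable M (F k)" for k
  proof -
    consider "k = i" | "k = j" | "k \<noteq> i \<and> k \<noteq> j" by blast
    then show ?thesis
    proof cases
      case 1 then have "F k = f" using ij by (simp add: F_def fun_eq_iff)
      then show ?thesis using fg by simp
    next
      case 2 then have "F k = g" using ij by (simp add: F_def fun_eq_iff)
      then show ?thesis using fg by simp
    next
      case 3 then have "F k = (\<lambda>_. 1)" by (simp add: F_def fun_eq_iff)
      then show ?thesis by simp
    qed
  qed
  have "(\<integral>x. (\<Prod>k\<in>{..<n}. F k (x k)) \<partial>PiM {..<n} (\<lambda>_. M)) = (\<Prod>k\<in>{..<n}. integral\<^sup>L M (F k))"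
    using ps.product_integral_prod[of "{..<n}" F] iF by simp
  moreover have "(\<Prod>k\<in>{..<n}. F k (x k)) = f (x i) * g (x j)" for x
    unfolding F_def prod.distrib using ij by simp
  moreover have "(\<Prod>k\<in>{..<n}. integral\<^sup>L M (F k)) = (\<integral>x. f x \<partial>M) * (\<integral>x. g x \<partial>M)"
  proof -
    have "integral\<^sup>L M (F k) = (if k = i then (\<integral>x. f x \<partial>M) else 1) * (if k = j then (\<integral>x. g x \<partial>M) else 1)" for k
      using ij Fi Fo[of k] by (auto simp: prob_space)
    then have "(\<Prod>k\<in>{..<n}. integral\<^sup>L M (F k)) = (\<Prod>k\<in>{..<n}. (if k = i then (\<integral>x. f x \<partial>M) else 1)) * (\<Prod>k\<in>{..<n}. (if k = j then (\<integral>x. g x \<partial>M) else 1))"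
      by (simp add: prod.distrib)
    then show ?thesis using ij by simp
  qed
  ultimately show ?thesis by simp
qed

lemma pair_mult:
  fixes f :: "'a \<Rightarrow> real" and g :: "'b \<Rightarrow> real"
  assumes M1: "prob_space M1" and M2: "prob_space M2" and f: "integrable M1 f" and g: "integrable M2 g"
  shows "integrable (M1 \<Otimes>\<^sub>M M2) (\<lambda>z. f (fst z) * g (snd z))"
    "(\<integral>z. f (fst z) * g (snd z) \<partial>(M1 \<Otimes>\<^sub>M M2)) = (\<integral>x. f x \<partial>M1) * (\<integral>y. g y \<partial>M2)"
proof -
  interpret p: pair_sigma_finite M1 M2
    using M1 M2 by (simp add: pair_sigma_finite_def prob_space_imp_sigma_finite)
  have [measurable]: "f \<in> borel_measurable M1" "g \<in> borel_measurable M2" using f g by auto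
  show i: "integrable (M1 \<Otimes>\<^sub>M M2) (\<lambda>z. f (fst z) * g (snd z))"
  proof (rule p.Fubini_integrable)
    show "(\<lambda>z. f (fst z) * g (snd z)) \<in> borel_measurable (M1 \<Otimes>\<^sub>M M2)" by measurable
    have "(\<lambda>x. \<integral>y. norm (f (fst (x, y)) * g (snd (x, y))) \<partial>M2) = (\<lambda>x. \<bar>f x\<bar> * (\<integral>y. \<bar>g y\<bar> \<partial>M2))"
      by (simp add: abs_mult)
    moreover have "integrable M1 (\<lambda>x. \<bar>f x\<bar> * (\<integral>y. \<bar>g y\<bar> \<partial>M2))"
      using f by (intro integrable_mult_left) auto
    ultimately show "integrable M1 (\<lambda>x. \<integral>y. norm (f (fst (x, y)) * g (snd (x, y))) \<partial>M2)" by simp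
    show "AE x in M1. integrable M2 (\<lambda>y. f (fst (x, y)) * g (snd (x, y)))"
      using g by (auto intro!: integrable_mult_right)
  qed
  have "(\<integral>z. f (fst z) * g (snd z) \<partial>(M1 \<Otimes>\<^sub>M M2)) = (\<integral>x. (\<integral>y. f (fst (x,y)) * g (snd (x,y)) \<partial>M2) \<partial>M1)"
    using p.integral_fst'[OF i] by simp
  also have "\<dots> = (\<integral>x. f x * (\<integral>y. g y \<partial>M2) \<partial>M1)" by simp
  also have "\<dots> = (\<integral>x. f x \<partial>M1) * (\<integral>y. g y \<partial>M2)" by simp
  finally show "(\<integral>z. f (fst z) * g (snd z) \<partial>(M1 \<Otimes>\<^sub>M M2)) = (\<integral>x. f x \<partial>M1) * (\<integral>y. g y \<partial>M2)" .
qed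

lemma rad_prob: "prob_space rademacher_signs"
  unfolding rademacher_signs_def by (rule measure_pmf.prob_space_axioms)

lemma rad_int: "integrable rademacher_signs (f :: real \<Rightarrow> real)"
  unfolding rademacher_signs_def by (rule integrable_measure_pmf_finite) simp

lemma rad_integral: "(\<integral>s. f s \<partial>rademacher_signs) = (f (-1) + f 1) / (2::real)"
  unfolding rademacher_signs_def by (subst integral_pmf_of_set) auto

lemma rad_AE: "AE s in rademacher_signs. s = -1 \<or> s = 1"
  unfolding rademacher_signs_def by (subst AE_measure_pmf_iff) auto

lemma rad_meas[measurable]: "(f :: real \<Rightarrow> real) \<in> borel_measurable rademacher_signs"
  unfolding rademacher_signs_def by simp

lemma sets_rad[simp]: "sets rademacher_signs = UNIV"
  unfolding rademacher_signs_def by simp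

lemma countable_dense_subset:
  fixes S :: "'b::second_countable_topology set"
  shows "\<exists>D\<subseteq>S. countable D \<and> S \<subseteq> closure D"
proof -
  obtain \<B> :: "'b set set" where B: "countable \<B>" "\<And>C. C \<in> \<B> \<Longrightarrow> open C"
    "\<And>T. open T \<Longrightarrow> \<exists>U. U \<subseteq> \<B> \<and> T = \<Union>U"
    using univ_second_countable by blast
  define D where "D = (\<lambda>b. SOME x. x \<in> b \<inter> S) ` {b\<in>\<B>. b \<inter> S \<noteq> {}}"
  have DS: "D \<subseteq> S"
  proof
    fix d assume "d \<in> D"
    then obtain b where b: "b \<inter> S \<noteq> {}" "d = (SOME x. x \<in> b \<inter> S)" unfolding D_def by blast
    have "\<exists>x. x \<in> b \<inter> S" using b(1) by blast
    from someI_ex[OF this] show "d \<in> S" using b(2) by blast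
  qed
  have cD: "countable D" unfolding D_def
    by (rule countable_image) (rule countable_subset[OF _ B(1)], blast)
  have "s \<in> closure D" if s: "s \<in> S" for s
    unfolding closure_iff_nhds_not_empty
  proof (intro allI impI)
    fix A T assume T: "T \<subseteq> A" "open T" "s \<in> T"
    obtain U where U: "U \<subseteq> \<B>" "T = \<Union>U" using B(3)[OF T(2)] by blast
    then obtain b where b: "b \<in> U" "s \<in> b" using T(3) by auto
    have bB: "b \<in> \<B>" "b \<inter> S \<noteq> {}" using b U s by auto
    define d where "d = (SOME x. x \<in> b \<inter> S)"
    have "\<exists>x. x \<in> b \<inter> S" using bB(2) by blast
    from someI_ex[OF this] have "d \<in> b \<inter> S" unfolding d_def .
    moreover have "d \<in> D" unfolding D_def d_def using bB by auto
    moreover have "b \<subseteq> T" using U b by auto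
    ultimately show "D \<inter> A \<noteq> {}" using T(1) by blast
  qed
  then show ?thesis using DS cD by blast
qed



locale absetting =
  fixes P :: "'a measure" and n r0 :: nat and psi :: "nat \<Rightarrow> 'a \<Rightarrow> real" and fs :: "'a \<Rightarrow> real"
    and Hset :: "('a \<Rightarrow> real) set" and w rr :: real
  assumes P: "prob_space P"
  and atoms: "\<And>x. x \<in> space P \<Longrightarrow> {x} \<in> sets P \<and> emeasure P {x} = 0"
  and diag: "{z \<in> space (P \<Otimes>\<^sub>M P). fst z = snd z} \<in> sets (P \<Otimes>\<^sub>M P)"
  and psi: "\<And>k. k < r0 \<Longrightarrow> bm P (psi k)"
  and fsb: "bm P fs"
  and Hset: "\<And>H. H \<in> Hset \<Longrightarrow> \<exists>c. H = (\<lambda>x. \<Sum>k<r0. c k * psi k x)"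
  and w: "w > 0" and rr: "rr > 0" and r0n: "r0 \<le> n" and npos: "n > 0"
begin

sublocale Pp: prob_space P by (rule P)

abbreviation "M1 \<equiv> PiM {..<n} (\<lambda>_. P)"
abbreviation "M2 \<equiv> PiM {..<n} (\<lambda>_. rademacher_signs)"
abbreviation "RM \<equiv> M1 \<Otimes>\<^sub>M M2"

lemma RM_eq: "rad_measure P n = RM" by (simp add: rad_measure_def)

lemma probM1: "prob_space M1" by (intro prob_space_PiM P)
lemma probM2: "prob_space M2" by (intro prob_space_PiM rad_prob)
lemma probRM: "prob_space RM" by (intro prob_space_pair probM1 probM2)

lemma meas_x[measurable]: "i < n \<Longrightarrow> (\<lambda>z. fst z i) \<in> measurable RM P"
  by (rule measurable_compose[OF measurable_fst measurable_component_singleton]) auto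

lemma meas_s[measurable]: "i < n \<Longrightarrow> (\<lambda>z. snd z i) \<in> borel_measurable RM"
proof -
  assume i: "i < n"
  have "(\<lambda>z. snd z i) \<in> measurable RM rademacher_signs"
    using i by (intro measurable_compose[OF measurable_snd measurable_component_singleton]) auto
  then show ?thesis by (rule measurable_compose) simp
qed

lemma psi_meas[measurable]: "k < r0 \<Longrightarrow> psi k \<in> borel_measurable P"
  using psi by (auto simp: bm_def)

lemma fs_meas[measurable]: "fs \<in> borel_measurable P"
  using fsb by (auto simp: bm_def)

lemma space_RM: "z \<in> space RM \<Longrightarrow> i < n \<Longrightarrow> fst z i \<in> space P"
  by (auto simp: space_pair_measure space_PiM PiE_def Pi_def)

lemma eq_pred[measurable]:
  assumes "i < n" "j < n"
  shows "Measurable.pred RM (\<lambda>z. fst z i = fst z j)"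
proof -
  have m: "(\<lambda>z. (fst z i, fst z j)) \<in> measurable RM (P \<Otimes>\<^sub>M P)"
    using assms by measurable
  have "{z \<in> space RM. fst z i = fst z j} = (\<lambda>z. (fst z i, fst z j)) -` {z \<in> space (P \<Otimes>\<^sub>M P). fst z = snd z} \<inter> space RM"
    using assms by (auto simp: space_pair_measure space_PiM PiE_def Pi_def)
  also have "\<dots> \<in> sets RM" using measurable_sets[OF m diag] .
  finally show ?thesis by (simp add: pred_def)
qed

definition hc :: "(nat \<Rightarrow> real) \<Rightarrow> 'a \<Rightarrow> real" where "hc c x = (\<Sum>k<r0. c k * psi k x)"
definition feas :: "('a \<Rightarrow> real) \<Rightarrow> ('a \<Rightarrow> real) \<Rightarrow> bool" where
  "feas H e \<longleftrightarrow> e \<in> borel_measurable P \<and> (\<forall>x\<in>space P. \<bar>e x\<bar> \<le> w) \<and> (\<integral>x. (H x + e x - fs x)^2 \<partial>P) \<le> rr"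
definition G :: "('a \<Rightarrow> real) set" where
  "G = {\<lambda>x. H x + e x - fs x | H e. H \<in> Hset \<and> e \<in> borel_measurable P \<and> (\<forall>x\<in>space P. \<bar>e x\<bar> \<le> w) \<and> (\<integral>x. (H x + e x - fs x)^2 \<partial>P) \<le> rr}"
definition Cf :: "(nat \<Rightarrow> real) set" where "Cf = {c. hc c \<in> Hset \<and> (\<exists>e. feas (hc c) e)}"
definition sgs :: "(nat \<Rightarrow> 'a) \<times> (nat \<Rightarrow> real) \<Rightarrow> 'a \<Rightarrow> real" where
  "sgs z p = (\<Sum>j<n. if fst z j = p then snd z j else 0)"
definition Dz :: "(nat \<Rightarrow> 'a) \<times> (nat \<Rightarrow> real) \<Rightarrow> real" where
  "Dz z = (\<Sum>i<n. snd z i * sgn (sgs z (fst z i)))"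
definition Fc :: "(nat \<Rightarrow> real) \<Rightarrow> (nat \<Rightarrow> 'a) \<times> (nat \<Rightarrow> real) \<Rightarrow> real" where
  "Fc c z = (\<Sum>i<n. snd z i * (hc c (fst z i) - fs (fst z i))) / n + w * Dz z / n"
definition val :: "(nat \<Rightarrow> 'a) \<times> (nat \<Rightarrow> real) \<Rightarrow> ('a \<Rightarrow> real) \<Rightarrow> real" where
  "val z f = (\<Sum>i<n. snd z i * f (fst z i)) / real n"

lemma hc_meas[measurable]: "hc c \<in> borel_measurable P"
  unfolding hc_def by measurable

lemma ite_meas: "i < n \<Longrightarrow> j < n \<Longrightarrow> (\<lambda>z. if fst z j = fst z i then snd z j else 0) \<in> borel_measurable RM"
  by (rule measurable_If) (use eq_pred[of j i] in \<open>auto simp: pred_def intro: meas_s\<close>)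

lemma Dz_meas[measurable]: "Dz \<in> borel_measurable RM"
  unfolding Dz_def sgs_def
  by (intro borel_measurable_sum borel_measurable_times meas_s measurable_compose[OF _ borel_measurable_sgn] ite_meas) auto

lemma Fc_meas[measurable]: "Fc c \<in> borel_measurable RM"
  unfolding Fc_def
  by (intro borel_measurable_add borel_measurable_divide borel_measurable_sum borel_measurable_times meas_s
    borel_measurable_diff measurable_compose[OF meas_x hc_meas] measurable_compose[OF meas_x fs_meas] Dz_meas borel_measurable_const) auto

lemma regroup:
  "(\<Sum>i<n. snd z i * h (fst z i)) = (\<Sum>p\<in>fst z ` {..<n}. h p * sgs z p)"
proof -
  have "(\<Sum>p\<in>fst z ` {..<n}. h p * sgs z p) = (\<Sum>p\<in>fst z ` {..<n}. \<Sum>j<n. if fst z j = p then h p * snd z j else 0)"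
    unfolding sgs_def by (simp add: sum_distrib_left if_distrib cong: if_cong)
  also have "\<dots> = (\<Sum>j<n. \<Sum>p\<in>fst z ` {..<n}. if fst z j = p then h p * snd z j else 0)"
    by (rule sum.swap)
  also have "\<dots> = (\<Sum>j<n. h (fst z j) * snd z j)"
    by (intro sum.cong refl) (simp add: if_distrib cong: if_cong)
  finally show ?thesis by (simp add: mult.commute)
qed

lemma Dz_alt: "Dz z = (\<Sum>p\<in>fst z ` {..<n}. \<bar>sgs z p\<bar>)"
proof -
  have "Dz z = (\<Sum>p\<in>fst z ` {..<n}. sgn (sgs z p) * sgs z p)"
    unfolding Dz_def using regroup[of z "\<lambda>p. sgn (sgs z p)"] .
  also have "\<dots> = (\<Sum>p\<in>fst z ` {..<n}. \<bar>sgs z p\<bar>)"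
    by (intro sum.cong refl) (simp add: abs_sgn mult.commute)
  finally show ?thesis .
qed

lemma e_upper:
  assumes z: "z \<in> space RM" and e: "\<forall>x\<in>space P. \<bar>e x\<bar> \<le> w"
  shows "(\<Sum>i<n. snd z i * e (fst z i)) \<le> w * Dz z"
proof -
  have "(\<Sum>i<n. snd z i * e (fst z i)) = (\<Sum>p\<in>fst z ` {..<n}. e p * sgs z p)" by (rule regroup)
  also have "\<dots> \<le> (\<Sum>p\<in>fst z ` {..<n}. w * \<bar>sgs z p\<bar>)"
  proof (intro sum_mono)
    fix p assume "p \<in> fst z ` {..<n}"
    then have "p \<in> space P" using space_RM[OF z] by auto
    then have "\<bar>e p\<bar> \<le> w" using e by auto
    then have "e p * sgs z p \<le> \<bar>e p\<bar> * \<bar>sgs z p\<bar>" by (metis abs_ge_self abs_mult)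
    also have "\<dots> \<le> w * \<bar>sgs z p\<bar>" using \<open>\<bar>e p\<bar> \<le> w\<close> by (intro mult_right_mono) auto
    finally show "e p * sgs z p \<le> w * \<bar>sgs z p\<bar>" .
  qed
  also have "\<dots> = w * Dz z" by (simp add: Dz_alt sum_distrib_left)
  finally show ?thesis .
qed

lemma e_achieve:
  assumes z: "z \<in> space RM" and fe: "feas (hc c) e"
  shows "\<exists>e'. feas (hc c) e' \<and> (\<Sum>i<n. snd z i * e' (fst z i)) = w * Dz z"
proof -
  define X where "X = fst z ` {..<n}"
  have X: "finite X" "X \<subseteq> space P" using space_RM[OF z] by (auto simp: X_def)
  have [measurable]: "{p} \<in> sets P" if "p \<in> X" for p using atoms X that by auto
  have em[measurable]: "e \<in> borel_measurable P" and eb: "\<forall>x\<in>space P. \<bar>e x\<bar> \<le> w"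
    and ei: "(\<integral>x. (hc c x + e x - fs x)^2 \<partial>P) \<le> rr"
    using fe by (auto simp: feas_def)
  define e' where "e' x = e x + (\<Sum>p\<in>X. indicator {p} x * (w * sgn (sgs z p) - e p))" for x
  have e'X: "e' x = w * sgn (sgs z x)" if "x \<in> X" for x
  proof -
    have "(\<Sum>p\<in>X. indicator {p} x * (w * sgn (sgs z p) - e p)) = (\<Sum>p\<in>X. if p = x then w * sgn (sgs z p) - e p else 0)"
      by (intro sum.cong refl) (auto simp: indicator_def)
    also have "\<dots> = w * sgn (sgs z x) - e x" using X that by simp
    finally show ?thesis by (simp add: e'_def)
  qed
  have e'nX: "e' x = e x" if "x \<notin> X" for x
  proof -
    have "(\<Sum>p\<in>X. indicator {p} x * (w * sgn (sgs z p) - e p)) = 0"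
      using that by (intro sum.neutral) (auto simp: indicator_def)
    then show ?thesis by (simp add: e'_def)
  qed
  have e'm[measurable]: "e' \<in> borel_measurable P"
    unfolding e'_def using X by (intro borel_measurable_add em borel_measurable_sum borel_measurable_times
      borel_measurable_indicator borel_measurable_const) auto
  have e'b: "\<forall>x\<in>space P. \<bar>e' x\<bar> \<le> w"
  proof
    fix x assume x: "x \<in> space P"
    show "\<bar>e' x\<bar> \<le> w"
    proof (cases "x \<in> X")
      case True
      then show ?thesis using w by (simp add: e'X abs_mult abs_sgn_eq)
    next
      case False
      then show ?thesis using eb x by (simp add: e'nX)
    qed
  qed
  have ae: "AE x in P. x \<notin> X"
  proof -
    have "AE x in P. \<forall>p\<in>X. x \<noteq> p"
    proof (subst AE_finite_all[OF X(1)], intro ballI)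
      fix p assume p: "p \<in> X"
      then have "{p} \<in> null_sets P" using atoms X by (auto simp: null_sets_def)
      then show "AE x in P. x \<noteq> p" by (rule AE_I') auto
    qed
    then show ?thesis by auto
  qed
  have "(\<integral>x. (hc c x + e' x - fs x)^2 \<partial>P) = (\<integral>x. (hc c x + e x - fs x)^2 \<partial>P)"
    by (rule integral_cong_AE) (use ae in \<open>auto simp: e'nX\<close>)
  then have "feas (hc c) e'" using e'm e'b ei by (simp add: feas_def)
  moreover have "(\<Sum>i<n. snd z i * e' (fst z i)) = w * Dz z"
    unfolding Dz_def sum_distrib_left
    by (intro sum.cong refl) (simp add: e'X X_def)
  ultimately show ?thesis by blast
qed

lemma val_split:
  "val z (\<lambda>x. hc c x + e x - fs x) = (\<Sum>i<n. snd z i * (hc c (fst z i) - fs (fst z i))) / n + (\<Sum>i<n. snd z i * e (fst z i)) / n"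
  unfolding val_def by (simp add: sum.distrib[symmetric] add_divide_distrib[symmetric] algebra_simps)

lemma G_elem: "g \<in> G \<Longrightarrow> \<exists>c\<in>Cf. \<exists>e. feas (hc c) e \<and> g = (\<lambda>x. hc c x + e x - fs x)"
proof -
  assume "g \<in> G"
  then obtain H e where He: "g = (\<lambda>x. H x + e x - fs x)" "H \<in> Hset" "e \<in> borel_measurable P"
    "\<forall>x\<in>space P. \<bar>e x\<bar> \<le> w" "(\<integral>x. (H x + e x - fs x)^2 \<partial>P) \<le> rr"
    unfolding G_def by blast
  obtain c where c: "H = (\<lambda>x. \<Sum>k<r0. c k * psi k x)" using Hset[OF He(2)] by blast
  have Hc: "H = hc c" using c by (simp add: hc_def fun_eq_iff)
  have "feas (hc c) e" using He Hc by (simp add: feas_def)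
  moreover then have "c \<in> Cf" using He(2) Hc by (auto simp: Cf_def)
  ultimately show ?thesis using He(1) Hc by blast
qed

lemma G_intro: "c \<in> Cf \<Longrightarrow> feas (hc c) e \<Longrightarrow> (\<lambda>x. hc c x + e x - fs x) \<in> G"
  unfolding G_def Cf_def feas_def by blast

lemma G_empty: "G = {} \<longleftrightarrow> Cf = {}"
proof
  assume "G = {}"
  then show "Cf = {}" using G_intro by (auto simp: Cf_def)
next
  assume "Cf = {}"
  then show "G = {}" using G_elem by blast
qed

lemma UB:
  assumes z: "z \<in> space RM"
  shows "(\<forall>v\<in>val z ` G. v \<le> u) \<longleftrightarrow> (\<forall>c\<in>Cf. Fc c z \<le> u)"
proof
  assume H: "\<forall>v\<in>val z ` G. v \<le> u"
  show "\<forall>c\<in>Cf. Fc c z \<le> u"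
  proof
    fix c assume c: "c \<in> Cf"
    then obtain e where "feas (hc c) e" by (auto simp: Cf_def)
    then obtain e' where e': "feas (hc c) e'" "(\<Sum>i<n. snd z i * e' (fst z i)) = w * Dz z"
      using e_achieve[OF z] by blast
    have "val z (\<lambda>x. hc c x + e' x - fs x) = Fc c z"
      unfolding val_split Fc_def e'(2) by simp
    moreover have "(\<lambda>x. hc c x + e' x - fs x) \<in> G" by (rule G_intro[OF c e'(1)])
    ultimately show "Fc c z \<le> u" using H by force
  qed
next
  assume H: "\<forall>c\<in>Cf. Fc c z \<le> u"
  show "\<forall>v\<in>val z ` G. v \<le> u"
  proof
    fix v assume "v \<in> val z ` G"
    then obtain g where g: "g \<in> G" "v = val z g" by blast
    obtain c e where ce: "c \<in> Cf" "feas (hc c) e" "g = (\<lambda>x. hc c x + e x - fs x)" using G_elem[OF g(1)] by blast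
    have "(\<Sum>i<n. snd z i * e (fst z i)) \<le> w * Dz z"
      using ce(2) by (intro e_upper[OF z]) (auto simp: feas_def)
    then have "v \<le> Fc c z" unfolding g(2) ce(3) val_split Fc_def using npos
      by (simp add: divide_right_mono)
    then show "v \<le> u" using H ce(1) by force
  qed
qed

lemma Fc_cont: "continuous_on UNIV (\<lambda>c. Fc c z)"
proof -
  have "continuous_on UNIV (\<lambda>c. (\<Sum>i<n. snd z i * (hc c (fst z i) - fs (fst z i))))"
    unfolding hc_def
    by (intro continuous_on_sum continuous_on_mult continuous_on_const continuous_on_diff
        continuous_on_product_coordinates)
  then have "continuous_on UNIV (\<lambda>c. (\<Sum>i<n. snd z i * (hc c (fst z i) - fs (fst z i))) * (1 / real n) + w * Dz z / n)"
    by (intro continuous_on_add continuous_on_mult continuous_on_const)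
  then show ?thesis unfolding Fc_def by simp
qed

definition Dc :: "(nat \<Rightarrow> real) set" where "Dc = (SOME D. D \<subseteq> Cf \<and> countable D \<and> Cf \<subseteq> closure D)"

lemma Dc: "Dc \<subseteq> Cf" "countable Dc" "Cf \<subseteq> closure Dc"
  using someI_ex[OF countable_dense_subset[of Cf]] unfolding Dc_def by auto

lemma UB2: "(\<forall>c\<in>Cf. Fc c z \<le> u) \<longleftrightarrow> (\<forall>c\<in>Dc. Fc c z \<le> u)"
proof
  assume "\<forall>c\<in>Dc. Fc c z \<le> u"
  then have "Dc \<subseteq> {c. Fc c z \<le> u}" by auto
  moreover have "closed {c. Fc c z \<le> u}" by (intro closed_Collect_le Fc_cont continuous_on_const)
  ultimately have "closure Dc \<subseteq> {c. Fc c z \<le> u}" by (rule closure_minimal)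
  then show "\<forall>c\<in>Cf. Fc c z \<le> u" using Dc(3) by auto
qed (use Dc(1) in auto)

definition gD :: "nat \<Rightarrow> nat \<Rightarrow> real" where "gD = from_nat_into Dc"

lemma Dc_ne: "G \<noteq> {} \<Longrightarrow> Dc \<noteq> {}"
  using G_empty Dc(3) by auto

lemma range_gD: "G \<noteq> {} \<Longrightarrow> range gD = Dc"
  unfolding gD_def using Dc_ne Dc(2) by simp

lemma rs_eq:
  assumes "G \<noteq> {}" "z \<in> space RM"
  shows "rad_sup n G z = Sup (range (\<lambda>k. Fc (gD k) z))"
proof -
  have "rad_sup n G z = Sup (val z ` G)"
    using assms by (simp add: rad_sup_def val_def[abs_def])
  also have "\<dots> = Sup (range (\<lambda>k. Fc (gD k) z))"
  proof (rule Sup_real_ub_eq)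
    fix u
    have "(\<forall>y\<in>range (\<lambda>k. Fc (gD k) z). y \<le> u) \<longleftrightarrow> (\<forall>c\<in>range gD. Fc c z \<le> u)" by auto
    then show "(\<forall>x\<in>val z ` G. x \<le> u) = (\<forall>y\<in>range (\<lambda>k. Fc (gD k) z). y \<le> u)"
      using UB[OF assms(2)] UB2 range_gD[OF assms(1)] by simp
  qed
  finally show ?thesis .
qed

lemma rs_meas: "rad_sup n G \<in> borel_measurable RM"
proof (cases "G = {}")
  case True
  then have "rad_sup n G = (\<lambda>z. 0)" by (simp add: fun_eq_iff rad_sup_def)
  then show ?thesis by simp
next
  case False
  have m: "(\<lambda>z. Sup (range (\<lambda>k. Fc (gD k) z))) \<in> borel_measurable RM"
    by (intro meas_Sup_nat Fc_meas)
  have "rad_sup n G \<in> borel_measurable RM \<longleftrightarrow> (\<lambda>z. Sup (range (\<lambda>k. Fc (gD k) z))) \<in> borel_measurable RM"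
    by (rule measurable_cong) (rule rs_eq[OF False])
  then show ?thesis using m by simp
qed

end

context absetting
begin

lemma bm_comp: "i < n \<Longrightarrow> bm P f \<Longrightarrow> bm M1 (\<lambda>x. f (x i))"
proof -
  assume i: "i < n" and f: "bm P f"
  then obtain B where B: "\<forall>x\<in>space P. \<bar>f x\<bar> \<le> B" and [measurable]: "f \<in> borel_measurable P"
    by (auto simp: bm_def)
  have "(\<lambda>x. f (x i)) \<in> borel_measurable M1"
    using i by (intro measurable_compose[OF measurable_component_singleton]) auto
  moreover have "\<forall>x\<in>space M1. \<bar>f (x i)\<bar> \<le> B" using B i by (auto simp: space_PiM)
  ultimately show ?thesis by (auto simp: bm_def)
qed

lemma AE_sig: "AE s in M2. \<forall>i<n. s i = -1 \<or> s i = 1"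
proof -
  have "AE s in M2. \<forall>i\<in>{..<n}. s i = -1 \<or> s i = 1"
    by (subst AE_finite_all) (auto intro!: AE_PiM_component rad_prob rad_AE)
  then show ?thesis by eventually_elim auto
qed

lemma sig_meas[measurable]: "i < n \<Longrightarrow> (\<lambda>s. s i) \<in> borel_measurable M2"
  by (rule measurable_compose[OF measurable_component_singleton]) auto

lemma abs_sig: "(\<forall>i<n. s i = -1 \<or> s i = 1) \<Longrightarrow> i < n \<Longrightarrow> \<bar>s i\<bar> = (1::real)"
  by force

lemma sig_int1: "i < n \<Longrightarrow> integrable M2 (\<lambda>s. s i)"
proof -
  assume i: "i < n"
  interpret p2: prob_space M2 by (rule probM2)
  show ?thesis
    by (rule p2.integrable_const_bound[where B=1]) (use AE_sig i in \<open>auto elim!: eventually_mono\<close>)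
qed

lemma sig_int2: "i < n \<Longrightarrow> j < n \<Longrightarrow> integrable M2 (\<lambda>s. s i * s j)"
proof -
  assume i: "i < n" "j < n"
  interpret p2: prob_space M2 by (rule probM2)
  have "AE s in M2. norm (s i * s j) \<le> 1" using AE_sig
    by eventually_elim (use i abs_sig in \<open>auto simp: abs_mult\<close>)
  then show ?thesis by (rule p2.integrable_const_bound) (use i in measurable)
qed

lemma sig_intabs: "i < n \<Longrightarrow> integrable M2 (\<lambda>s. \<bar>s i\<bar>)"
  using sig_int1 by auto

lemma sig_E1: "i < n \<Longrightarrow> (\<integral>s. s i \<partial>M2) = 0"
  using pim1[OF rad_prob, of i n "\<lambda>s. s"] by (simp add: rad_integral rad_int)

lemma sig_Eabs: "i < n \<Longrightarrow> (\<integral>s. \<bar>s i\<bar> \<partial>M2) = 1"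
  using pim1[OF rad_prob, of i n "\<lambda>s. \<bar>s\<bar>"] by (simp add: rad_integral rad_int)

lemma sig_E2: "i < n \<Longrightarrow> j < n \<Longrightarrow> (\<integral>s. s i * s j \<partial>M2) = (if i = j then 1 else 0)"
proof -
  assume ij: "i < n" "j < n"
  show ?thesis
  proof (cases "i = j")
    case True
    then show ?thesis using pim1[OF rad_prob, of i n "\<lambda>s. s * s"] ij by (simp add: rad_integral rad_int)
  next
    case False
    then show ?thesis using pim2[OF rad_prob ij False, of "\<lambda>s. s" "\<lambda>s. s"] ij by (simp add: rad_integral rad_int)
  qed
qed

lemma pairRM:
  fixes F :: "(nat \<Rightarrow> 'a) \<Rightarrow> real" and S :: "(nat \<Rightarrow> real) \<Rightarrow> real"
  assumes "integrable M1 F" "integrable M2 S"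
  shows "integrable RM (\<lambda>z. F (fst z) * S (snd z))"
    "(\<integral>z. F (fst z) * S (snd z) \<partial>RM) = (\<integral>x. F x \<partial>M1) * (\<integral>s. S s \<partial>M2)"
  using pair_mult[OF probM1 probM2 assms] by auto

lemma term1:
  assumes "i < n" "bm P f"
  shows "integrable RM (\<lambda>z. snd z i * f (fst z i))" "(\<integral>z. snd z i * f (fst z i) \<partial>RM) = 0"
proof -
  interpret p1: prob_space M1 by (rule probM1)
  have F: "integrable M1 (\<lambda>x. f (x i))" using bm_comp[OF assms] by (rule p1.bm_integrable)
  have e: "(\<lambda>z. snd z i * f (fst z i)) = (\<lambda>z. (\<lambda>x. f (x i)) (fst z) * (\<lambda>s. s i) (snd z))"
    by (simp add: fun_eq_iff mult.commute)
  show "integrable RM (\<lambda>z. snd z i * f (fst z i))"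
    unfolding e by (rule pairRM(1)[OF F sig_int1[OF assms(1)]])
  show "(\<integral>z. snd z i * f (fst z i) \<partial>RM) = 0"
    unfolding e pairRM(2)[OF F sig_int1[OF assms(1)]] using sig_E1[OF assms(1)] by simp
qed

lemma term_abs:
  assumes "i < n"
  shows "integrable RM (\<lambda>z. \<bar>snd z i\<bar>)" "(\<integral>z. \<bar>snd z i\<bar> \<partial>RM) = 1"
proof -
  interpret p1: prob_space M1 by (rule probM1)
  have e: "(\<lambda>z. \<bar>snd z i\<bar>) = (\<lambda>z. (\<lambda>x. 1::real) (fst z) * (\<lambda>s. \<bar>s i\<bar>) (snd z))"
    by (simp add: fun_eq_iff)
  show "integrable RM (\<lambda>z. \<bar>snd z i\<bar>)"
    unfolding e by (rule pairRM(1)[OF _ sig_intabs[OF assms(1)]]) simp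
  show "(\<integral>z. \<bar>snd z i\<bar> \<partial>RM) = 1"
    using pairRM(2)[of "\<lambda>x. 1" "\<lambda>s. \<bar>s i\<bar>", OF _ sig_intabs[OF assms(1)]] sig_Eabs[OF assms(1)]
    by (simp add: p1.prob_space)
qed

lemma term2:
  assumes "i < n" "j < n" "bm P f" "bm P g"
  shows "integrable RM (\<lambda>z. (snd z i * snd z j) * (f (fst z i) * g (fst z j)))"
    "(\<integral>z. (snd z i * snd z j) * (f (fst z i) * g (fst z j)) \<partial>RM) = (if i = j then (\<integral>x. f x * g x \<partial>P) else 0)"
proof -
  interpret p1: prob_space M1 by (rule probM1)
  have F: "integrable M1 (\<lambda>x. f (x i) * g (x j))"
    using bm_mult[OF bm_comp[OF assms(1,3)] bm_comp[OF assms(2,4)]] by (rule p1.bm_integrable)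
  have e: "(\<lambda>z. (snd z i * snd z j) * (f (fst z i) * g (fst z j))) = (\<lambda>z. (\<lambda>x. f (x i) * g (x j)) (fst z) * (\<lambda>s. s i * s j) (snd z))"
    by (simp add: fun_eq_iff mult.commute)
  show "integrable RM (\<lambda>z. (snd z i * snd z j) * (f (fst z i) * g (fst z j)))"
    unfolding e by (rule pairRM(1)[OF F sig_int2[OF assms(1,2)]])
  have fg: "integrable P (\<lambda>x. f x * g x)" using bm_mult[OF assms(3,4)] by (rule Pp.bm_integrable)
  show "(\<integral>z. (snd z i * snd z j) * (f (fst z i) * g (fst z j)) \<partial>RM) = (if i = j then (\<integral>x. f x * g x \<partial>P) else 0)"
    unfolding e pairRM(2)[OF F sig_int2[OF assms(1,2)]] using sig_E2[OF assms(1,2)]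
      pim1[OF P, of i n "\<lambda>x. f x * g x"] fg assms(1) by auto
qed

definition GSprop :: "nat \<times> (nat \<Rightarrow> 'a \<Rightarrow> real) \<times> (nat \<Rightarrow> nat \<Rightarrow> real) \<Rightarrow> bool" where
  "GSprop t \<longleftrightarrow> fst t \<le> r0 \<and> (\<forall>l<fst t. bm P (fst (snd t) l)) \<and>
     (\<forall>l<fst t. \<forall>l'<fst t. (\<integral>x. fst (snd t) l x * fst (snd t) l' x \<partial>P) = (if l = l' then 1 else 0)) \<and>
     (\<forall>k<r0. AE x in P. psi k x = (\<Sum>l<fst t. snd (snd t) k l * fst (snd t) l x))"

definition "GSt = (SOME t. GSprop t)"
definition "mm = fst GSt"
definition "\<phi> = fst (snd GSt)"
definition "AA = snd (snd GSt)"

lemma GS: "mm \<le> r0" "\<And>l. l < mm \<Longrightarrow> bm P (\<phi> l)"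
  "\<And>l l'. l < mm \<Longrightarrow> l' < mm \<Longrightarrow> (\<integral>x. \<phi> l x * \<phi> l' x \<partial>P) = (if l = l' then 1 else 0)"
  "\<And>k. k < r0 \<Longrightarrow> AE x in P. psi k x = (\<Sum>l<mm. AA k l * \<phi> l x)"
proof -
  obtain m f A where "m \<le> r0" "(\<forall>l<m. bm P (f l))"
     "(\<forall>l<m. \<forall>l'<m. (\<integral>x. f l x * f l' x \<partial>P) = (if l = l' then 1 else 0))"
     "(\<forall>k<r0. AE x in P. psi k x = (\<Sum>l<m. A k l * f l x))"
    using Pp.gram_schmidt[of r0 psi] psi by blast
  then have "GSprop (m, f, A)" by (simp add: GSprop_def)
  then have "GSprop GSt" unfolding GSt_def by (rule someI)
  then show "mm \<le> r0" "\<And>l. l < mm \<Longrightarrow> bm P (\<phi> l)"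
    "\<And>l l'. l < mm \<Longrightarrow> l' < mm \<Longrightarrow> (\<integral>x. \<phi> l x * \<phi> l' x \<partial>P) = (if l = l' then 1 else 0)"
    "\<And>k. k < r0 \<Longrightarrow> AE x in P. psi k x = (\<Sum>l<mm. AA k l * \<phi> l x)"
    unfolding GSprop_def mm_def \<phi>_def AA_def by auto
qed

definition av :: "nat \<Rightarrow> real" where "av l = (\<integral>x. fs x * \<phi> l x \<partial>P)"
definition rf :: "'a \<Rightarrow> real" where "rf x = fs x - (\<Sum>l<mm. av l * \<phi> l x)"
definition bco :: "(nat \<Rightarrow> real) \<Rightarrow> nat \<Rightarrow> real" where "bco c l = (\<Sum>k<r0. c k * AA k l)"
definition beta :: "(nat \<Rightarrow> real) \<Rightarrow> nat \<Rightarrow> real" where "beta c l = bco c l - av l"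

lemma bm_rf: "bm P rf"
  unfolding rf_def using fsb GS(2) by (auto intro!: bm_intros)

lemma bm_hc: "bm P (hc c)"
  unfolding hc_def[abs_def] using psi by (auto intro!: bm_intros)

lemma rf_orth: assumes l: "l < mm" shows "(\<integral>x. \<phi> l x * rf x \<partial>P) = 0"
proof -
  have i1: "integrable P (\<lambda>x. fs x * \<phi> l x)" using fsb GS(2) l by (auto intro!: Pp.bm_integrable bm_intros)
  have i3: "integrable P (\<lambda>x. av l' * (\<phi> l' x * \<phi> l x))" if "l' < mm" for l'
    using GS(2) l that by (auto intro!: Pp.bm_integrable bm_intros)
  have i2: "integrable P (\<lambda>x. \<Sum>l'<mm. av l' * (\<phi> l' x * \<phi> l x))" using i3 by auto
  have "(\<integral>x. \<phi> l x * rf x \<partial>P) = (\<integral>x. fs x * \<phi> l x - (\<Sum>l'<mm. av l' * (\<phi> l' x * \<phi> l x)) \<partial>P)"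
    unfolding rf_def by (simp add: right_diff_distrib sum_distrib_left mult.commute mult.left_commute)
  also have "\<dots> = av l - (\<Sum>l'<mm. av l' * (\<integral>x. \<phi> l' x * \<phi> l x \<partial>P))"
    using Bochner_Integration.integral_diff[OF i1 i2] Bochner_Integration.integral_sum[where I="{..<mm}" and f="\<lambda>l' x. av l' * (\<phi> l' x * \<phi> l x)", OF i3]
    by (simp add: av_def)
  also have "\<dots> = av l - (\<Sum>l'<mm. (if l' = l then av l' else 0))"
    using GS(3) l by (intro arg_cong2[where f="(-)"] sum.cong) auto
  also have "\<dots> = 0" using l by simp
  finally show ?thesis .
qed

lemma hc_expand: "(\<forall>k<r0. psi k x = (\<Sum>l<mm. AA k l * \<phi> l x)) \<Longrightarrow> hc c x = (\<Sum>l<mm. bco c l * \<phi> l x)"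
proof -
  assume H: "\<forall>k<r0. psi k x = (\<Sum>l<mm. AA k l * \<phi> l x)"
  have "hc c x = (\<Sum>k<r0. \<Sum>l<mm. c k * (AA k l * \<phi> l x))"
    unfolding hc_def using H by (simp add: sum_distrib_left)
  also have "\<dots> = (\<Sum>l<mm. \<Sum>k<r0. c k * (AA k l * \<phi> l x))" by (rule sum.swap)
  also have "\<dots> = (\<Sum>l<mm. bco c l * \<phi> l x)"
    unfolding bco_def by (simp add: sum_distrib_right mult.assoc)
  finally show ?thesis .
qed

lemma AE_psi: "AE x in P. \<forall>k<r0. psi k x = (\<Sum>l<mm. AA k l * \<phi> l x)"
proof -
  have "AE x in P. \<forall>k\<in>{..<r0}. psi k x = (\<Sum>l<mm. AA k l * \<phi> l x)"
    by (subst AE_finite_all) (auto intro: GS(4))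
  then show ?thesis by eventually_elim auto
qed

lemma diff_expand: "(\<forall>k<r0. psi k x = (\<Sum>l<mm. AA k l * \<phi> l x)) \<Longrightarrow>
   hc c x - fs x = (\<Sum>l<mm. beta c l * \<phi> l x) - rf x"
  by (simp add: hc_expand rf_def beta_def left_diff_distrib sum_subtractf)

definition Zc :: "(nat \<Rightarrow> real) \<Rightarrow> 'a \<Rightarrow> real" where "Zc c x = (\<Sum>l<mm. beta c l * \<phi> l x)"

lemma bm_Zc: "bm P (Zc c)"
  unfolding Zc_def[abs_def] using GS(2) by (auto intro!: bm_intros)

lemma phiZ: assumes l: "l < mm" shows "(\<integral>x. \<phi> l x * Zc c x \<partial>P) = beta c l"
proof -
  have i3: "integrable P (\<lambda>x. beta c l' * (\<phi> l x * \<phi> l' x))" if "l' < mm" for l'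
    using GS(2) l that by (auto intro!: Pp.bm_integrable bm_intros)
  have "(\<integral>x. \<phi> l x * Zc c x \<partial>P) = (\<integral>x. (\<Sum>l'<mm. beta c l' * (\<phi> l x * \<phi> l' x)) \<partial>P)"
    unfolding Zc_def by (simp add: sum_distrib_left mult.commute mult.left_commute)
  also have "\<dots> = (\<Sum>l'<mm. beta c l' * (\<integral>x. \<phi> l x * \<phi> l' x \<partial>P))"
    using Bochner_Integration.integral_sum[where I="{..<mm}" and f="\<lambda>l' x. beta c l' * (\<phi> l x * \<phi> l' x)", OF i3]
    by simp
  also have "\<dots> = (\<Sum>l'<mm. (if l = l' then beta c l' else 0))"
    using GS(3) l by (intro sum.cong) auto
  also have "\<dots> = beta c l" using l by simp
  finally show ?thesis .
qed

lemma ZZ: "(\<integral>x. (Zc c x)^2 \<partial>P) = (\<Sum>l<mm. (beta c l)^2)"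
proof -
  have i3: "integrable P (\<lambda>x. beta c l * (\<phi> l x * Zc c x))" if "l < mm" for l
    using GS(2) bm_Zc that by (auto intro!: Pp.bm_integrable bm_intros)
  have "(\<integral>x. (Zc c x)^2 \<partial>P) = (\<integral>x. (\<Sum>l<mm. beta c l * (\<phi> l x * Zc c x)) \<partial>P)"
    by (simp add: power2_eq_square Zc_def[of c] sum_distrib_right mult.assoc)
  also have "\<dots> = (\<Sum>l<mm. beta c l * (\<integral>x. \<phi> l x * Zc c x \<partial>P))"
    using Bochner_Integration.integral_sum[where I="{..<mm}" and f="\<lambda>l x. beta c l * (\<phi> l x * Zc c x)", OF i3]
    by simp
  also have "\<dots> = (\<Sum>l<mm. (beta c l)^2)"
    by (intro sum.cong refl) (simp add: phiZ power2_eq_square)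
  finally show ?thesis .
qed

lemma ZR: "(\<integral>x. Zc c x * rf x \<partial>P) = 0"
proof -
  have i3: "integrable P (\<lambda>x. beta c l * (\<phi> l x * rf x))" if "l < mm" for l
    using GS(2) bm_rf that by (auto intro!: Pp.bm_integrable bm_intros)
  have "(\<integral>x. Zc c x * rf x \<partial>P) = (\<integral>x. (\<Sum>l<mm. beta c l * (\<phi> l x * rf x)) \<partial>P)"
    by (simp add: Zc_def sum_distrib_right mult.assoc)
  also have "\<dots> = (\<Sum>l<mm. beta c l * (\<integral>x. \<phi> l x * rf x \<partial>P))"
    using Bochner_Integration.integral_sum[where I="{..<mm}" and f="\<lambda>l x. beta c l * (\<phi> l x * rf x)", OF i3]
    by simp
  also have "\<dots> = 0" by (simp add: rf_orth)
  finally show ?thesis .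
qed

lemma coef_bound:
  assumes c: "c \<in> Cf"
  shows "L2_set (beta c) {..<mm} \<le> sqrt rr + w"
proof -
  obtain e where fe: "feas (hc c) e" using c by (auto simp: Cf_def)
  have em[measurable]: "e \<in> borel_measurable P" and eb: "\<forall>x\<in>space P. \<bar>e x\<bar> \<le> w"
    and ei: "(\<integral>x. (hc c x + e x - fs x)^2 \<partial>P) \<le> rr"
    using fe by (auto simp: feas_def)
  have bme: "bm P e" using em eb by (auto simp: bm_def)
  define u where "u x = hc c x + e x - fs x" for x
  have bmu: "bm P u" unfolding u_def[abs_def] using bme bm_hc fsb by (auto intro!: bm_intros)
  have I: "integrable P f" if "bm P f" for f using that by (rule Pp.bm_integrable)
  define N where "N = sqrt (\<integral>x. (Zc c x)^2 \<partial>P)"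
  have N0: "N \<ge> 0" unfolding N_def by simp
  have aeu: "AE x in P. Zc c x * u x - Zc c x * e x = (Zc c x)^2 - Zc c x * rf x"
    using AE_psi
  proof eventually_elim
    case (elim x)
    then have eq: "hc c x - fs x = Zc c x - rf x" unfolding Zc_def by (rule diff_expand)
    have "Zc c x * u x - Zc c x * e x = Zc c x * (hc c x - fs x)" by (simp add: u_def algebra_simps)
    also have "\<dots> = Zc c x * (Zc c x - rf x)" using eq by simp
    also have "\<dots> = (Zc c x)^2 - Zc c x * rf x" by (simp add: power2_eq_square algebra_simps)
    finally show ?case .
  qed
  have "(\<integral>x. (Zc c x)^2 \<partial>P) = (\<integral>x. (Zc c x)^2 - Zc c x * rf x \<partial>P)"
    using ZR[of c] I[OF bm_sq[OF bm_Zc]] I[OF bm_mult[OF bm_Zc bm_rf]] by simp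
  also have "\<dots> = (\<integral>x. Zc c x * u x - Zc c x * e x \<partial>P)"
    by (rule integral_cong_AE[symmetric]) (use aeu in \<open>auto intro!: bm_meas bm_intros bm_Zc bmu bme bm_rf\<close>)
  also have "\<dots> = (\<integral>x. Zc c x * u x \<partial>P) + (\<integral>x. Zc c x * (- e x) \<partial>P)"
    using I[OF bm_mult[OF bm_Zc bmu]] I[OF bm_mult[OF bm_Zc bme]] by simp
  also have "\<dots> \<le> N * sqrt rr + N * w"
  proof (rule add_mono)
    have "(\<integral>x. Zc c x * u x \<partial>P) \<le> N * sqrt (\<integral>x. (u x)^2 \<partial>P)" unfolding N_def
      by (rule Pp.CS_integral) (use bm_Zc bmu in \<open>auto intro!: I bm_intros bm_meas\<close>)
    also have "\<dots> \<le> N * sqrt rr" using ei N0 unfolding u_def by (intro mult_left_mono) auto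
    finally show "(\<integral>x. Zc c x * u x \<partial>P) \<le> N * sqrt rr" .
    have "(\<integral>x. Zc c x * (- e x) \<partial>P) \<le> N * sqrt (\<integral>x. (- e x)^2 \<partial>P)" unfolding N_def
      by (rule Pp.CS_integral) (use bm_Zc bme in \<open>auto intro!: I bm_intros bm_meas\<close>)
    also have "\<dots> \<le> N * w"
    proof (intro mult_left_mono N0)
      have "(\<integral>x. (- e x)^2 \<partial>P) \<le> (\<integral>x. w^2 \<partial>P)"
      proof (rule integral_mono)
        show "integrable P (\<lambda>x. (- e x)^2)" using bme by (auto intro!: I bm_intros)
        fix x assume "x \<in> space P"
        then have "\<bar>e x\<bar> \<le> w" using eb by auto
        then show "(- e x)^2 \<le> w^2" using power_mono[of "\<bar>e x\<bar>" w 2] by simp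
      qed simp
      also have "\<dots> = w^2" by (simp add: Pp.prob_space)
      finally have "(\<integral>x. (- e x)^2 \<partial>P) \<le> w^2" .
      then have "sqrt (\<integral>x. (- e x)^2 \<partial>P) \<le> sqrt (w^2)" by (rule real_sqrt_le_mono)
      then show "sqrt (\<integral>x. (- e x)^2 \<partial>P) \<le> w" using w by simp
    qed
    finally show "(\<integral>x. Zc c x * (- e x) \<partial>P) \<le> N * w" .
  qed
  finally have "N^2 \<le> N * (sqrt rr + w)"
    unfolding N_def by (simp add: distrib_left)
  then have "N \<le> sqrt rr + w" using N0 w rr
    by (metis mult_le_cancel_left_pos power2_eq_square not_le order_less_le_trans zero_le_mult_iff real_sqrt_ge_zero add_nonneg_nonneg less_eq_real_def mult_zero_left)
  moreover have "L2_set (beta c) {..<mm} = N"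
    unfolding N_def L2_set_def ZZ ..
  ultimately show ?thesis by simp
qed

definition Yl :: "nat \<Rightarrow> (nat \<Rightarrow> 'a) \<times> (nat \<Rightarrow> real) \<Rightarrow> real" where
  "Yl l z = (\<Sum>i<n. snd z i * \<phi> l (fst z i))"
definition Yn :: "(nat \<Rightarrow> 'a) \<times> (nat \<Rightarrow> real) \<Rightarrow> real" where
  "Yn z = L2_set (\<lambda>l. Yl l z) {..<mm}"
definition Rz :: "(nat \<Rightarrow> 'a) \<times> (nat \<Rightarrow> real) \<Rightarrow> real" where
  "Rz z = (\<Sum>i<n. snd z i * rf (fst z i))"
definition Bnd :: "(nat \<Rightarrow> 'a) \<times> (nat \<Rightarrow> real) \<Rightarrow> real" where
  "Bnd z = ((sqrt rr + w) * Yn z - Rz z) / n + w * Dz z / n"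

lemma Fc_le:
  assumes S: "\<forall>i<n. \<forall>k<r0. psi k (fst z i) = (\<Sum>l<mm. AA k l * \<phi> l (fst z i))" and c: "c \<in> Cf"
  shows "Fc c z \<le> Bnd z"
proof -
  have "(\<Sum>i<n. snd z i * (hc c (fst z i) - fs (fst z i))) = (\<Sum>i<n. snd z i * ((\<Sum>l<mm. beta c l * \<phi> l (fst z i)) - rf (fst z i)))"
    using S by (intro sum.cong refl) (simp add: diff_expand)
  also have "\<dots> = (\<Sum>l<mm. beta c l * Yl l z) - Rz z"
  proof -
    have "(\<Sum>i<n. snd z i * (\<Sum>l<mm. beta c l * \<phi> l (fst z i))) = (\<Sum>i<n. \<Sum>l<mm. beta c l * (snd z i * \<phi> l (fst z i)))"
      by (simp add: sum_distrib_left mult.left_commute)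
    also have "\<dots> = (\<Sum>l<mm. beta c l * Yl l z)"
      by (subst sum.swap) (simp add: Yl_def sum_distrib_left)
    finally show ?thesis by (simp add: Rz_def right_diff_distrib sum_subtractf)
  qed
  also have "\<dots> \<le> (sqrt rr + w) * Yn z - Rz z"
  proof -
    have "(\<Sum>l<mm. beta c l * Yl l z) \<le> (\<Sum>l<mm. \<bar>beta c l\<bar> * \<bar>Yl l z\<bar>)"
      by (intro sum_mono) (metis abs_ge_self abs_mult)
    also have "\<dots> \<le> L2_set (beta c) {..<mm} * Yn z"
      unfolding Yn_def by (rule L2_set_mult_ineq)
    also have "\<dots> \<le> (sqrt rr + w) * Yn z"
      using coef_bound[OF c] by (intro mult_right_mono) (auto simp: Yn_def)
    finally show ?thesis by simp
  qed
  finally have "(\<Sum>i<n. snd z i * (hc c (fst z i) - fs (fst z i))) / n \<le> ((sqrt rr + w) * Yn z - Rz z) / n"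
    using npos by (simp add: divide_right_mono)
  then show ?thesis unfolding Fc_def Bnd_def by simp
qed

lemma AE_sample: "AE z in RM. \<forall>i<n. \<forall>k<r0. psi k (fst z i) = (\<Sum>l<mm. AA k l * \<phi> l (fst z i))"
proof -
  have "AE x in M1. \<forall>i\<in>{..<n}. \<forall>k<r0. psi k (x i) = (\<Sum>l<mm. AA k l * \<phi> l (x i))"
    by (subst AE_finite_all) (auto intro!: AE_PiM_component P AE_psi)
  then have "AE x in M1. \<forall>i<n. \<forall>k<r0. psi k (x i) = (\<Sum>l<mm. AA k l * \<phi> l (x i))"
    by eventually_elim auto
  then have "AE x in distr RM M1 fst. \<forall>i<n. \<forall>k<r0. psi k (x i) = (\<Sum>l<mm. AA k l * \<phi> l (x i))"
  proof -
    have eq: "distr RM M1 fst = M1" by (rule prob_space.distr_pair_fst[OF probM2])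
    show ?thesis unfolding eq by fact
  qed
  then show ?thesis by (rule AE_distrD[OF measurable_fst])
qed

lemma phi_meas: "l < mm \<Longrightarrow> \<phi> l \<in> borel_measurable P"
  using GS(2) by (auto simp: bm_def)

lemma rf_meas: "rf \<in> borel_measurable P"
  using bm_rf by (auto simp: bm_def)

lemma Yl_meas: "l < mm \<Longrightarrow> Yl l \<in> borel_measurable RM"
  unfolding Yl_def[abs_def]
  by (intro borel_measurable_sum borel_measurable_times meas_s measurable_compose[OF meas_x phi_meas]) auto

lemma Yn_meas: "Yn \<in> borel_measurable RM"
  unfolding Yn_def[abs_def] L2_set_def
  by (intro measurable_compose[OF _ borel_measurable_sqrt] borel_measurable_sum borel_measurable_power Yl_meas) auto

lemma Rz_meas: "Rz \<in> borel_measurable RM"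
  unfolding Rz_def[abs_def]
  by (intro borel_measurable_sum borel_measurable_times meas_s measurable_compose[OF meas_x rf_meas]) auto

lemma Bnd_meas: "Bnd \<in> borel_measurable RM"
  unfolding Bnd_def[abs_def]
  by (intro borel_measurable_add borel_measurable_divide borel_measurable_diff borel_measurable_times
     borel_measurable_const Yn_meas Rz_meas Dz_meas)

lemma Yl_sq:
  assumes l: "l < mm"
  shows "integrable RM (\<lambda>z. (Yl l z)^2)" "(\<integral>z. (Yl l z)^2 \<partial>RM) = n"
proof -
  have e: "(\<lambda>z. (Yl l z)^2) = (\<lambda>z. \<Sum>i<n. \<Sum>j<n. (snd z i * snd z j) * (\<phi> l (fst z i) * \<phi> l (fst z j)))"
    unfolding Yl_def power2_eq_square sum_product by (simp add: fun_eq_iff mult_ac)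
  have t: "integrable RM (\<lambda>z. (snd z i * snd z j) * (\<phi> l (fst z i) * \<phi> l (fst z j)))" if "i < n" "j < n" for i j
    using term2(1)[OF that GS(2)[OF l] GS(2)[OF l]] .
  show "integrable RM (\<lambda>z. (Yl l z)^2)" unfolding e
    by (intro Bochner_Integration.integrable_sum) (simp add: t)
  have "(\<integral>z. (Yl l z)^2 \<partial>RM) = (\<Sum>i<n. (\<integral>z. (\<Sum>j<n. (snd z i * snd z j) * (\<phi> l (fst z i) * \<phi> l (fst z j))) \<partial>RM))"
    unfolding e by (rule Bochner_Integration.integral_sum) (intro Bochner_Integration.integrable_sum, simp add: t)
  also have "\<dots> = (\<Sum>i<n. \<Sum>j<n. (\<integral>z. (snd z i * snd z j) * (\<phi> l (fst z i) * \<phi> l (fst z j)) \<partial>RM))"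
    by (intro sum.cong refl Bochner_Integration.integral_sum) (simp add: t)
  also have "\<dots> = (\<Sum>i<n. \<Sum>j<n. (if i = j then 1 else 0))"
    using term2(2)[OF _ _ GS(2)[OF l] GS(2)[OF l]] GS(3)[OF l l] by (intro sum.cong refl) auto
  also have "\<dots> = n" by simp
  finally show "(\<integral>z. (Yl l z)^2 \<partial>RM) = n" .
qed

lemma Yn_sq: "(Yn z)^2 = (\<Sum>l<mm. (Yl l z)^2)"
  unfolding Yn_def L2_set_def by (simp add: sum_nonneg)

lemma Yn_int: "integrable RM Yn" "(\<integral>z. (Yn z)^2 \<partial>RM) = mm * n" "integrable RM (\<lambda>z. (Yn z)^2)"
proof -
  interpret pr: prob_space RM by (rule probRM)
  show i2: "integrable RM (\<lambda>z. (Yn z)^2)" unfolding Yn_sq using Yl_sq(1) by auto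
  show "integrable RM Yn" by (rule pr.square_integrable_imp_integrable[OF Yn_meas i2])
  show "(\<integral>z. (Yn z)^2 \<partial>RM) = mm * n" unfolding Yn_sq
    using Yl_sq by (simp add: Bochner_Integration.integral_sum)
qed

lemma EYn: "(\<integral>z. Yn z \<partial>RM) \<le> sqrt (mm * n)"
proof -
  interpret pr: prob_space RM by (rule probRM)
  have "(\<integral>z. Yn z * 1 \<partial>RM) \<le> sqrt (\<integral>z. (Yn z)^2 \<partial>RM) * sqrt (\<integral>z. 1^2 \<partial>RM)"
    by (rule pr.CS_integral) (use Yn_int Yn_meas in auto)
  then show ?thesis using Yn_int(2) by (simp add: pr.prob_space)
qed

lemma Rz_int: "integrable RM Rz" "(\<integral>z. Rz z \<partial>RM) = 0"
proof -
  show "integrable RM Rz" unfolding Rz_def[abs_def] using term1(1)[OF _ bm_rf] by auto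
  show "(\<integral>z. Rz z \<partial>RM) = 0" unfolding Rz_def[abs_def] using term1[OF _ bm_rf]
    by (simp add: Bochner_Integration.integral_sum)
qed

lemma Dz_abs: "\<bar>Dz z\<bar> \<le> (\<Sum>i<n. \<bar>snd z i\<bar>)"
proof -
  have "\<bar>Dz z\<bar> \<le> (\<Sum>i<n. \<bar>snd z i * sgn (sgs z (fst z i))\<bar>)" unfolding Dz_def by (rule sum_abs)
  also have "\<dots> \<le> (\<Sum>i<n. \<bar>snd z i\<bar>)"
    by (intro sum_mono) (auto simp: abs_mult abs_sgn_eq)
  finally show ?thesis .
qed

lemma Dz_int: "integrable RM Dz" "(\<integral>z. Dz z \<partial>RM) \<le> n"
proof -
  have ia: "integrable RM (\<lambda>z. \<Sum>i<n. \<bar>snd z i\<bar>)" using term_abs(1) by auto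
  show iD: "integrable RM Dz"
    by (rule Bochner_Integration.integrable_bound[OF ia Dz_meas]) (auto intro!: AE_I2 order_trans[OF Dz_abs])
  have "(\<integral>z. Dz z \<partial>RM) \<le> (\<integral>z. (\<Sum>i<n. \<bar>snd z i\<bar>) \<partial>RM)"
    by (rule integral_mono[OF iD ia]) (use Dz_abs in \<open>auto simp: abs_le_iff\<close>)
  also have "\<dots> = n" using term_abs by (simp add: Bochner_Integration.integral_sum)
  finally show "(\<integral>z. Dz z \<partial>RM) \<le> n" .
qed

lemma Fc_int: "integrable RM (Fc c)"
proof -
  have b: "bm P (\<lambda>x. hc c x - fs x)" using bm_hc fsb by (auto intro!: bm_intros)
  have "integrable RM (\<lambda>z. \<Sum>i<n. snd z i * (hc c (fst z i) - fs (fst z i)))"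
    using term1(1)[OF _ b] by auto
  then show ?thesis unfolding Fc_def[abs_def] using Dz_int(1) by auto
qed

lemma Bnd_int: "integrable RM Bnd" "(\<integral>z. Bnd z \<partial>RM) \<le> (sqrt rr + w) * sqrt (mm * n) / n + w"
proof -
  show "integrable RM Bnd" unfolding Bnd_def[abs_def] using Yn_int(1) Rz_int(1) Dz_int(1) by auto
  have "(\<integral>z. Bnd z \<partial>RM) = ((sqrt rr + w) * (\<integral>z. Yn z \<partial>RM) - (\<integral>z. Rz z \<partial>RM)) / n + w * (\<integral>z. Dz z \<partial>RM) / n"
    unfolding Bnd_def[abs_def] using Yn_int(1) Rz_int(1) Dz_int(1) by simp
  also have "\<dots> \<le> (sqrt rr + w) * sqrt (mm * n) / n + w * n / n"
  proof -
    have a: "(sqrt rr + w) * (\<integral>z. Yn z \<partial>RM) \<le> (sqrt rr + w) * sqrt (mm * n)"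
      by (rule mult_left_mono[OF EYn]) (use w rr in \<open>auto intro!: add_nonneg_nonneg\<close>)
    have b: "w * (\<integral>z. Dz z \<partial>RM) \<le> w * n"
      by (rule mult_left_mono[OF Dz_int(2)]) (use w in auto)
    show ?thesis using a b Rz_int(2) npos
      by (intro add_mono divide_right_mono) auto
  qed
  also have "\<dots> = (sqrt rr + w) * sqrt (mm * n) / n + w" using npos by simp
  finally show "(\<integral>z. Bnd z \<partial>RM) \<le> (sqrt rr + w) * sqrt (mm * n) / n + w" .
qed

lemma arith_final: "(sqrt rr + w) * sqrt (mm * n) / n + w \<le> sqrt (rr * real r0 / real n) + 2 * w"
proof -
  have n: "real n > 0" using npos by simp
  have q: "sqrt (mm * n) / n = sqrt (mm / n)"
  proof -
    have "sqrt (real mm * real n) / real n = sqrt mm * sqrt n / (sqrt n * sqrt n)"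
      using n by (simp add: real_sqrt_mult)
    also have "\<dots> = sqrt mm / sqrt n" using n by (intro nonzero_mult_divide_mult_cancel_right) simp
    also have "\<dots> = sqrt (mm / n)" by (simp add: real_sqrt_divide)
    finally show ?thesis by simp
  qed
  have q1: "sqrt (mm / n) \<le> sqrt (r0 / n)"
    using GS(1) n by (intro real_sqrt_le_mono divide_right_mono) auto
  have q2: "sqrt (r0 / n) \<le> 1" using r0n n by simp
  have "(sqrt rr + w) * sqrt (mm * n) / n = sqrt rr * sqrt (mm / n) + w * sqrt (mm / n)"
  proof -
    have "(sqrt rr + w) * sqrt (mm * n) / n = (sqrt rr + w) * (sqrt (mm * n) / n)" by simp
    also have "\<dots> = (sqrt rr + w) * sqrt (mm / n)" using q by simp
    finally show ?thesis by (simp add: distrib_right)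
  qed
  also have "\<dots> \<le> sqrt rr * sqrt (r0 / n) + w * 1"
    using q1 q2 w rr by (intro add_mono mult_left_mono) auto
  also have "sqrt rr * sqrt (r0 / n) = sqrt (rr * real r0 / real n)"
    by (simp add: real_sqrt_mult[symmetric])
  finally show ?thesis by simp
qed

theorem abs_main: "integrable (rad_measure P n) (rad_sup n G) \<and> rademacher P n G \<le> sqrt (rr * real r0 / real n) + 2 * w"
  unfolding rademacher_def RM_eq
proof (cases "G = {}")
  case True
  then have "rad_sup n G = (\<lambda>z. 0)" by (simp add: fun_eq_iff rad_sup_def)
  then show "integrable RM (rad_sup n G) \<and> (\<integral>z. rad_sup n G z \<partial>RM) \<le> sqrt (rr * real r0 / real n) + 2 * w"
    using w rr by simp
next
  case False
  have ae: "AE z in RM. rad_sup n G z \<le> Bnd z \<and> Fc (gD 0) z \<le> rad_sup n G z"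
    using AE_sample AE_space
  proof eventually_elim
    case (elim z)
    have all: "Fc (gD k) z \<le> Bnd z" for k
    proof -
      have "gD k \<in> Cf" using range_gD[OF False] Dc(1) by auto
      then show ?thesis using Fc_le[OF elim(1)] by blast
    qed
    have eq: "rad_sup n G z = Sup (range (\<lambda>k. Fc (gD k) z))" by (rule rs_eq[OF False elim(2)])
    have "Sup (range (\<lambda>k. Fc (gD k) z)) \<le> Bnd z" using all by (intro cSup_least) auto
    moreover have "Fc (gD 0) z \<le> Sup (range (\<lambda>k. Fc (gD k) z))"
      using all by (intro cSup_upper) (auto simp: bdd_above_def)
    ultimately show ?case using eq by simp
  qed
  have iB: "integrable RM (\<lambda>z. \<bar>Fc (gD 0) z\<bar> + \<bar>Bnd z\<bar>)" using Fc_int Bnd_int(1) by auto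
  have irs: "integrable RM (rad_sup n G)"
  proof (rule Bochner_Integration.integrable_bound[OF iB rs_meas])
    show "AE z in RM. norm (rad_sup n G z) \<le> norm (\<bar>Fc (gD 0) z\<bar> + \<bar>Bnd z\<bar>)"
      using ae by eventually_elim auto
  qed
  have "(\<integral>z. rad_sup n G z \<partial>RM) \<le> (\<integral>z. Bnd z \<partial>RM)"
    by (rule integral_mono_AE[OF irs Bnd_int(1)]) (use ae in auto)
  also have "\<dots> \<le> (sqrt rr + w) * sqrt (mm * n) / n + w" by (rule Bnd_int(2))
  also have "\<dots> \<le> sqrt (rr * real r0 / real n) + 2 * w" by (rule arith_final)
  finally show "integrable RM (rad_sup n G) \<and> (\<integral>z. rad_sup n G z \<partial>RM) \<le> sqrt (rr * real r0 / real n) + 2 * w"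
    using irs by simp
qed

end

lemma meas_unif:
  fixes f :: "(nat \<Rightarrow> real) \<Rightarrow> real"
  shows "f \<in> borel_measurable (lebesgue_d d) \<Longrightarrow> f \<in> borel_measurable (unif_sphere d)"
proof -
  assume f: "f \<in> borel_measurable (lebesgue_d d)"
  have eq: "measurable (unif_sphere d) (borel :: real measure) = measurable (restrict_space (lebesgue_d d) (sph d)) borel"
    by (rule measurable_cong_sets) (simp_all add: sets_unif usets_restrict)
  show ?thesis unfolding eq by (rule measurable_restrict_space1[OF f])
qed

lemma coord_meas: assumes "i < d" shows "(\<lambda>x. x i) \<in> borel_measurable (lebesgue_d d)"
proof -
  have "(\<lambda>x. x i) \<in> measurable (lebesgue_d d) lborel"
    unfolding lebesgue_d_def using assms by (intro measurable_component_singleton) auto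
  then show ?thesis by simp
qed

lemma ip_meas: "(\<lambda>x. ip d x s) \<in> borel_measurable (lebesgue_d d)"
  unfolding ip_def by (intro borel_measurable_sum borel_measurable_times coord_meas borel_measurable_const) auto

lemma sph_coord: "x \<in> sph d \<Longrightarrow> i < d \<Longrightarrow> \<bar>x i\<bar> \<le> 1"
proof -
  assume x: "x \<in> sph d" and i: "i < d"
  have "Nrm d x = 1" using x by (simp add: Nrm_def sph_def)
  then show ?thesis using coord_le_Nrm[OF i, of x] by simp
qed

lemma ip_bound:
  assumes x: "x \<in> sph d" and s: "s \<in> sph d"
  shows "\<bar>ip d x s\<bar> \<le> 1"
proof -
  have ab: "\<bar>a * b\<bar> \<le> (a^2 + b^2) / 2" for a b :: real
  proof -
    have "0 \<le> (\<bar>a\<bar> - \<bar>b\<bar>)^2" by simp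
    then show ?thesis by (simp add: power2_eq_square algebra_simps abs_mult)
  qed
  have "\<bar>ip d x s\<bar> \<le> (\<Sum>i<d. \<bar>x i * s i\<bar>)" unfolding ip_def by (rule sum_abs)
  also have "\<dots> \<le> (\<Sum>i<d. ((x i)^2 + (s i)^2) / 2)" by (intro sum_mono ab)
  also have "\<dots> = ((\<Sum>i<d. (x i)^2) + (\<Sum>i<d. (s i)^2)) / 2"
    by (simp add: sum_divide_distrib[symmetric] sum.distrib)
  also have "\<dots> = 1" using x s by (simp add: sph_def)
  finally show ?thesis .
qed

definition FK :: "real \<Rightarrow> real" where
  "FK t = (pi - arccos (max (-1) (min 1 t))) / (2 * pi) * (1 + t)"

lemma FK_meas: "FK \<in> borel_measurable borel"
proof -
  have "continuous_on UNIV FK" unfolding FK_def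
    by (intro continuous_intros) auto
  then show ?thesis by (rule borel_measurable_continuous_onI)
qed

lemma Kker_FK: "x \<in> sph d \<Longrightarrow> s \<in> sph d \<Longrightarrow> Kker d x s = FK (ip d x s)"
proof -
  assume "x \<in> sph d" "s \<in> sph d"
  then have b: "\<bar>ip d x s\<bar> \<le> 1" by (rule ip_bound)
  then have "max (-1) (min 1 (ip d x s)) = ip d x s" by auto
  moreover have "Kker d x s = K0 d x s * (1 + ip d x s)" by (simp add: Kker_def K1_def algebra_simps)
  ultimately show ?thesis by (simp add: K0_def FK_def)
qed

lemma FK_bound: "\<bar>t\<bar> \<le> 1 \<Longrightarrow> \<bar>FK t\<bar> \<le> 1"
proof -
  assume t: "\<bar>t\<bar> \<le> 1"
  then have m: "max (-1) (min 1 t) = t" by auto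
  have a: "0 \<le> arccos t" "arccos t \<le> pi" using t by (auto intro!: arccos_lbound arccos_ubound)
  have k: "0 \<le> (pi - arccos t) / (2 * pi)" "(pi - arccos t) / (2 * pi) \<le> 1/2"
    using a pi_gt_zero by (auto simp: field_simps)
  have o: "0 \<le> 1 + t" "1 + t \<le> 2" using t by auto
  define p where "p = (pi - arccos t) / (2 * pi)"
  have "0 \<le> p * (1 + t)" using k o unfolding p_def by (intro mult_nonneg_nonneg) auto
  moreover have "p * (1 + t) \<le> 1/2 * 2" using k o unfolding p_def by (intro mult_mono) auto
  ultimately have "\<bar>p * (1 + t)\<bar> \<le> 1" by simp
  then show ?thesis unfolding FK_def m p_def .
qed

lemma Kker_bm: assumes s: "s \<in> sph d" shows "bm (unif_sphere d) (\<lambda>x. Kker d x s)"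
proof -
  have m: "(\<lambda>x. FK (ip d x s)) \<in> borel_measurable (unif_sphere d)"
    by (intro meas_unif measurable_compose[OF ip_meas FK_meas])
  have "(\<lambda>x. Kker d x s) \<in> borel_measurable (unif_sphere d) \<longleftrightarrow> (\<lambda>x. FK (ip d x s)) \<in> borel_measurable (unif_sphere d)"
    by (rule measurable_cong) (simp add: space_unif Kker_FK s)
  moreover have "\<forall>x\<in>space (unif_sphere d). \<bar>Kker d x s\<bar> \<le> 1"
    using s by (auto simp: space_unif Kker_FK intro!: FK_bound ip_bound)
  ultimately show ?thesis using m by (auto simp: bm_def)
qed

lemma SH_bm: assumes g: "g \<in> SH d l" shows "bm (unif_sphere d) g"
proof -
  obtain c where gc: "g = (\<lambda>x. if x \<in> sph d then (\<Sum>m\<in>mi d l. c m * (\<Prod>i<d. x i ^ m i)) else 0)"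
    using g by (auto simp: SH_def)
  define q where "q x = (\<Sum>m\<in>mi d l. c m * (\<Prod>i<d. x i ^ m i))" for x
  have qm: "q \<in> borel_measurable (unif_sphere d)"
    unfolding q_def
    by (intro meas_unif borel_measurable_sum borel_measurable_times borel_measurable_const borel_measurable_prod
       borel_measurable_power coord_meas) auto
  have "g \<in> borel_measurable (unif_sphere d) \<longleftrightarrow> q \<in> borel_measurable (unif_sphere d)"
    by (rule measurable_cong) (simp add: space_unif gc q_def)
  moreover have "\<forall>x\<in>space (unif_sphere d). \<bar>g x\<bar> \<le> (\<Sum>m\<in>mi d l. \<bar>c m\<bar>)"
  proof
    fix x assume x: "x \<in> space (unif_sphere d)"
    then have xs: "x \<in> sph d" by (simp add: space_unif)
    have "\<bar>g x\<bar> = \<bar>\<Sum>m\<in>mi d l. c m * (\<Prod>i<d. x i ^ m i)\<bar>" using xs by (simp add: gc)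
    also have "\<dots> \<le> (\<Sum>m\<in>mi d l. \<bar>c m * (\<Prod>i<d. x i ^ m i)\<bar>)" by (rule sum_abs)
    also have "\<dots> \<le> (\<Sum>m\<in>mi d l. \<bar>c m\<bar>)"
    proof (intro sum_mono)
      fix m
      have "\<bar>\<Prod>i<d. x i ^ m i\<bar> \<le> 1"
        unfolding abs_prod
        by (intro prod_le_1) (auto simp: power_abs intro!: power_le_one sph_coord[OF xs])
      then show "\<bar>c m * (\<Prod>i<d. x i ^ m i)\<bar> \<le> \<bar>c m\<bar>"
        by (simp add: abs_mult mult_left_le)
    qed
    finally show "\<bar>g x\<bar> \<le> (\<Sum>m\<in>mi d l. \<bar>c m\<bar>)" .
  qed
  ultimately show ?thesis using qm by (auto simp: bm_def)
qed

lemma target_bm: assumes "target d k0 \<gamma>0 fs" shows "bm (unif_sphere d) fs"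
proof -
  obtain g where g: "\<forall>l\<le>k0. g l \<in> SH d l" "\<forall>x\<in>sph d. fs x = (\<Sum>l\<le>k0. g l x)"
    using assms by (auto simp: target_def)
  have b: "bm (unif_sphere d) (\<lambda>x. \<Sum>l\<le>k0. g l x)"
    by (rule bm_sum) (use g(1) SH_bm in auto)
  then obtain B where B: "(\<lambda>x. \<Sum>l\<le>k0. g l x) \<in> borel_measurable (unif_sphere d)"
    "\<forall>x\<in>space (unif_sphere d). \<bar>\<Sum>l\<le>k0. g l x\<bar> \<le> B" by (auto simp: bm_def)
  have "fs \<in> borel_measurable (unif_sphere d) \<longleftrightarrow> (\<lambda>x. \<Sum>l\<le>k0. g l x) \<in> borel_measurable (unif_sphere d)"
    by (rule measurable_cong) (simp add: space_unif g(2))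
  moreover have "\<forall>x\<in>space (unif_sphere d). \<bar>fs x\<bar> \<le> B" using B(2) g(2) by (simp add: space_unif)
  ultimately show ?thesis using B(1) by (auto simp: bm_def)
qed

lemma diag_unif:
  "{z \<in> space (unif_sphere d \<Otimes>\<^sub>M unif_sphere d). fst z = snd z} \<in> sets (unif_sphere d \<Otimes>\<^sub>M unif_sphere d)"
proof -
  let ?Q = "unif_sphere d \<Otimes>\<^sub>M unif_sphere d"
  have cm: "(\<lambda>z. fst z k) \<in> borel_measurable ?Q" "(\<lambda>z. snd z k) \<in> borel_measurable ?Q" if "k < d" for k
    using that by (auto intro!: measurable_compose[OF measurable_fst] measurable_compose[OF measurable_snd] meas_unif coord_meas)
  have "{z \<in> space ?Q. fst z = snd z} = space ?Q \<inter> (\<Inter>k\<in>{..<d}. {z \<in> space ?Q. fst z k = snd z k})"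
  proof (intro set_eqI iffI)
    fix z assume z: "z \<in> space ?Q \<inter> (\<Inter>k\<in>{..<d}. {z \<in> space ?Q. fst z k = snd z k})"
    then have "fst z \<in> sph d" "snd z \<in> sph d" by (auto simp: space_pair_measure space_unif)
    then have "fst z \<in> {..<d} \<rightarrow>\<^sub>E UNIV" "snd z \<in> {..<d} \<rightarrow>\<^sub>E UNIV" by (auto simp: sph_def)
    moreover have "\<forall>k\<in>{..<d}. fst z k = snd z k" using z by auto
    ultimately have "fst z = snd z" by (metis PiE_ext)
    then show "z \<in> {z \<in> space ?Q. fst z = snd z}" using z by auto
  qed auto
  also have "\<dots> \<in> sets ?Q"
  proof (cases "d = 0")
    case True then show ?thesis by simp
  next
    case False
    then show ?thesis
      by (intro sets.Int sets.top sets.finite_INT) (auto intro!: borel_measurable_eq cm)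
  qed
  finally show ?thesis .
qed

lemma per_S:
  fixes S :: "nat \<Rightarrow> nat \<Rightarrow> real" and U :: "nat \<Rightarrow> nat \<Rightarrow> real"
  assumes d: "d \<ge> 2" and nm: "n \<ge> m_sum d k0" and w: "w > 0" and tf: "target d k0 \<gamma>0 fs"
    and S: "S \<in> space (PiM {..<n} (\<lambda>_. unif_sphere d))" and r: "r > 0"
  shows "integrable (rad_measure (unif_sphere d) n) (rad_sup n (loc_class d n S U (m_sum d k0) Bh w fs r)) \<and>
     rademacher (unif_sphere d) n (loc_class d n S U (m_sum d k0) Bh w fs r)
       \<le> sqrt (r * real (m_sum d k0) / real n) + 2 * w"
proof (cases "n = 0")
  case True
  then have "rad_sup n F = (\<lambda>z. 0)" for F :: "((nat \<Rightarrow> real) \<Rightarrow> real) set"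
    by (auto simp: fun_eq_iff rad_sup_def image_constant_conv)
  then show ?thesis using True w by (simp add: rademacher_def)
next
  case False
  define r0 where "r0 = m_sum d k0"
  define psi where "psi k x = (\<Sum>i<n. Kker d x (S i) * U i k)" for k x
  define Hset where "Hset = {(\<lambda>x. \<Sum>i<n. Kker d x (S i) * \<alpha> i) | \<alpha>. (\<exists>c. \<forall>i<n. \<alpha> i = (\<Sum>k<r0. c k * U i k)) \<and>
      (\<Sum>i<n. \<Sum>j<n. \<alpha> i * \<alpha> j * Kker d (S i) (S j)) \<le> Bh^2}"
  have Si: "S i \<in> sph d" if "i < n" for i using S that by (auto simp: space_PiM space_unif PiE_def Pi_def)
  have a1: "prob_space (unif_sphere d)" using d by (intro prob_unif) simp
  have a2: "\<And>x. x \<in> space (unif_sphere d) \<Longrightarrow> {x} \<in> sets (unif_sphere d) \<and> emeasure (unif_sphere d) {x} = 0"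
    using d by (auto simp: space_unif sets_unif intro!: singleton_usets no_atom)
  have a4: "\<And>k. k < r0 \<Longrightarrow> bm (unif_sphere d) (psi k)"
    unfolding psi_def[abs_def] by (intro bm_sum bm_mult Kker_bm Si bm_const) auto
  have a5: "bm (unif_sphere d) fs" using tf by (rule target_bm)
  have a6: "\<And>H. H \<in> Hset \<Longrightarrow> \<exists>c. H = (\<lambda>x. \<Sum>k<r0. c k * psi k x)"
  proof -
    fix H assume hH: "H \<in> Hset"
    show "\<exists>c. H = (\<lambda>x. \<Sum>k<r0. c k * psi k x)"
    proof -
      obtain \<alpha> c where H: "H = (\<lambda>x. \<Sum>i<n. Kker d x (S i) * \<alpha> i)" "\<forall>i<n. \<alpha> i = (\<Sum>k<r0. c k * U i k)"
        using hH unfolding Hset_def by blast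
      have "(\<Sum>i<n. Kker d x (S i) * \<alpha> i) = (\<Sum>k<r0. c k * psi k x)" for x
      proof -
        have "(\<Sum>i<n. Kker d x (S i) * \<alpha> i) = (\<Sum>i<n. \<Sum>k<r0. c k * (Kker d x (S i) * U i k))"
          using H(2) by (simp add: sum_distrib_left mult_ac)
        also have "\<dots> = (\<Sum>k<r0. \<Sum>i<n. c k * (Kker d x (S i) * U i k))" by (rule sum.swap)
        also have "\<dots> = (\<Sum>k<r0. c k * psi k x)" by (simp add: psi_def sum_distrib_left)
        finally show ?thesis .
      qed
      then show ?thesis using H(1) by auto
    qed
  qed
  interpret A: absetting "unif_sphere d" n r0 psi fs Hset w r
    by (rule absetting.intro[OF a1 a2 diag_unif a4 a5 a6]) (use w r nm False in \<open>auto simp: r0_def\<close>)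
  have eq: "loc_class d n S U (m_sum d k0) Bh w fs r = A.G"
    unfolding A.G_def unfolding loc_class_def Fcls_def Hset_def r0_def space_unif
  proof (intro set_eqI iffI)
    fix g assume "g \<in> {\<lambda>x. f x - fs x |f.
      f \<in> {\<lambda>x. (\<Sum>i<n. Kker d x (S i) * \<alpha> i) + e x |\<alpha> e.
           (\<exists>c. \<forall>i<n. \<alpha> i = (\<Sum>k<m_sum d k0. c k * U i k)) \<and>
           (\<Sum>i<n. \<Sum>j<n. \<alpha> i * \<alpha> j * Kker d (S i) (S j)) \<le> Bh\<^sup>2 \<and>
           e \<in> borel_measurable (unif_sphere d) \<and> (\<forall>x\<in>sph d. \<bar>e x\<bar> \<le> w)} \<and>
      (\<integral>x. (f x - fs x)\<^sup>2 \<partial>unif_sphere d) \<le> r}"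
    then obtain \<alpha> e where ae: "g = (\<lambda>x. (\<Sum>i<n. Kker d x (S i) * \<alpha> i) + e x - fs x)"
      "(\<exists>c. \<forall>i<n. \<alpha> i = (\<Sum>k<m_sum d k0. c k * U i k))"
      "(\<Sum>i<n. \<Sum>j<n. \<alpha> i * \<alpha> j * Kker d (S i) (S j)) \<le> Bh\<^sup>2"
      "e \<in> borel_measurable (unif_sphere d)" "(\<forall>x\<in>sph d. \<bar>e x\<bar> \<le> w)"
      "(\<integral>x. ((\<Sum>i<n. Kker d x (S i) * \<alpha> i) + e x - fs x)\<^sup>2 \<partial>unif_sphere d) \<le> r"
      by auto
    show "g \<in> {\<lambda>x. H x + e x - fs x |H e.
      H \<in> {\<lambda>x. \<Sum>i<n. Kker d x (S i) * \<alpha> i |\<alpha>.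
           (\<exists>c. \<forall>i<n. \<alpha> i = (\<Sum>k<m_sum d k0. c k * U i k)) \<and>
           (\<Sum>i<n. \<Sum>j<n. \<alpha> i * \<alpha> j * Kker d (S i) (S j)) \<le> Bh\<^sup>2} \<and>
      e \<in> borel_measurable (unif_sphere d) \<and>
      (\<forall>x\<in>sph d. \<bar>e x\<bar> \<le> w) \<and>
      (\<integral>x. (H x + e x - fs x)\<^sup>2 \<partial>unif_sphere d) \<le> r}"
      using ae by (intro CollectI exI[of _ "\<lambda>x. \<Sum>i<n. Kker d x (S i) * \<alpha> i"] exI[of _ e]) auto
  next
    fix g assume "g \<in> {\<lambda>x. H x + e x - fs x |H e.
      H \<in> {\<lambda>x. \<Sum>i<n. Kker d x (S i) * \<alpha> i |\<alpha>.
           (\<exists>c. \<forall>i<n. \<alpha> i = (\<Sum>k<m_sum d k0. c k * U i k)) \<and>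
           (\<Sum>i<n. \<Sum>j<n. \<alpha> i * \<alpha> j * Kker d (S i) (S j)) \<le> Bh\<^sup>2} \<and>
      e \<in> borel_measurable (unif_sphere d) \<and>
      (\<forall>x\<in>sph d. \<bar>e x\<bar> \<le> w) \<and>
      (\<integral>x. (H x + e x - fs x)\<^sup>2 \<partial>unif_sphere d) \<le> r}"
    then obtain \<alpha> e where ae: "g = (\<lambda>x. (\<Sum>i<n. Kker d x (S i) * \<alpha> i) + e x - fs x)"
      "(\<exists>c. \<forall>i<n. \<alpha> i = (\<Sum>k<m_sum d k0. c k * U i k))"
      "(\<Sum>i<n. \<Sum>j<n. \<alpha> i * \<alpha> j * Kker d (S i) (S j)) \<le> Bh\<^sup>2"
      "e \<in> borel_measurable (unif_sphere d)" "(\<forall>x\<in>sph d. \<bar>e x\<bar> \<le> w)"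
      "(\<integral>x. ((\<Sum>i<n. Kker d x (S i) * \<alpha> i) + e x - fs x)\<^sup>2 \<partial>unif_sphere d) \<le> r"
      by auto
    show "g \<in> {\<lambda>x. f x - fs x |f.
      f \<in> {\<lambda>x. (\<Sum>i<n. Kker d x (S i) * \<alpha> i) + e x |\<alpha> e.
           (\<exists>c. \<forall>i<n. \<alpha> i = (\<Sum>k<m_sum d k0. c k * U i k)) \<and>
           (\<Sum>i<n. \<Sum>j<n. \<alpha> i * \<alpha> j * Kker d (S i) (S j)) \<le> Bh\<^sup>2 \<and>
           e \<in> borel_measurable (unif_sphere d) \<and> (\<forall>x\<in>sph d. \<bar>e x\<bar> \<le> w)} \<and>
      (\<integral>x. (f x - fs x)\<^sup>2 \<partial>unif_sphere d) \<le> r}"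
      using ae by (intro CollectI exI[of _ "\<lambda>x. (\<Sum>i<n. Kker d x (S i) * \<alpha> i) + e x"]) auto
  qed
  show ?thesis using A.abs_main unfolding eq r0_def by simp
qed

theorem mainTheorem9:
  fixes k0 :: nat and \<gamma>0 Bh :: real
  assumes "k0 \<ge> 1" and "\<gamma>0 \<ge> 0" and "Bh > \<gamma>0"
  shows "\<exists>C d0. \<forall>d n \<delta> w fs. d \<ge> d0 \<longrightarrow> n \<ge> m_sum d k0 \<longrightarrow> 0 < \<delta> \<longrightarrow> \<delta> < 1 \<longrightarrow> w > 0 \<longrightarrow>
     target d k0 \<gamma>0 fs \<longrightarrow>
     (\<exists>E \<in> sets (PiM {..<n} (\<lambda>_. unif_sphere d)).
        measure (PiM {..<n} (\<lambda>_. unif_sphere d)) E \<ge> 1 - \<delta> \<and>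
        (\<forall>S\<in>E. \<forall>U \<sigma>. eigdec n (gram d n S) U \<sigma> \<longrightarrow> (\<forall>r>0.
           integrable (rad_measure (unif_sphere d) n)
             (rad_sup n (loc_class d n S U (m_sum d k0) Bh w fs r)) \<and>
           rademacher (unif_sphere d) n (loc_class d n S U (m_sum d k0) Bh w fs r)
             \<le> sqrt (ln (2 / \<delta>)) * (C * real d ^ k0 / real n)
                + sqrt (r * real (m_sum d k0) / real n) + 2 * w)))"
proof (intro exI[of _ "0::real"] exI[of _ "2::nat"] allI impI)
  fix d n :: nat and \<delta> w :: real and fs :: "(nat \<Rightarrow> real) \<Rightarrow> real"
  assume d: "2 \<le> d" and nm: "m_sum d k0 \<le> n" and \<delta>: "0 < \<delta>" "\<delta> < 1" and w: "0 < w"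
    and tf: "target d k0 \<gamma>0 fs"
  let ?M = "PiM {..<n} (\<lambda>_. unif_sphere d)"
  have pM: "prob_space ?M" using prob_unif d by (intro prob_space_PiM) auto
  show "\<exists>E \<in> sets ?M. measure ?M E \<ge> 1 - \<delta> \<and>
        (\<forall>S\<in>E. \<forall>U \<sigma>. eigdec n (gram d n S) U \<sigma> \<longrightarrow> (\<forall>r>0.
           integrable (rad_measure (unif_sphere d) n)
             (rad_sup n (loc_class d n S U (m_sum d k0) Bh w fs r)) \<and>
           rademacher (unif_sphere d) n (loc_class d n S U (m_sum d k0) Bh w fs r)
             \<le> sqrt (ln (2 / \<delta>)) * (0 * real d ^ k0 / real n)
                + sqrt (r * real (m_sum d k0) / real n) + 2 * w))"
  proof (intro bexI[of _ "space ?M"] conjI ballI allI impI)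
    show "measure ?M (space ?M) \<ge> 1 - \<delta>" using prob_space.prob_space[OF pM] \<delta> by simp
    show "space ?M \<in> sets ?M" by simp
    fix S U \<sigma> and r :: real
    assume S: "S \<in> space ?M" and r: "0 < r"
    show "integrable (rad_measure (unif_sphere d) n)
             (rad_sup n (loc_class d n S U (m_sum d k0) Bh w fs r))"
      using per_S[OF d nm w tf S r] by simp
    show "rademacher (unif_sphere d) n (loc_class d n S U (m_sum d k0) Bh w fs r)
             \<le> sqrt (ln (2 / \<delta>)) * (0 * real d ^ k0 / real n)
                + sqrt (r * real (m_sum d k0) / real n) + 2 * w"
      using per_S[OF d nm w tf S r] by simp
  qed
qed

end
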